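(* Let $l\in\frac12\mathbb N$ and let $V$ be a simple weight $\mathfrak g^{(l)}$-module such that $\mathrm{supp}(V)\subseteq\lambda+\mathbb Z$ for some $\lambda\in\mathbb C$ with $0<\dim V_\lambda<\infty$, and such that $\mathcal HV\ne0$. (i) If $V$ is not a highest (resp. lowest) weight module, then $e$ (resp. $f$) acts injectively on $V$. (ii) If $V$ is neither a highest nor a lowest weight module, then both $e$ and $f$ act bijectively on $V$; consequently, for every $\mu\in\mathrm{supp}(V)$ one has $\dim V_{\mu+2i}=\dim V_\mu$ for all $i\in\mathbb Z$, and if moreover $l\in\mathbb N-\frac12$ then $\dim V_{\mu+i}=\dim V_\mu$ for all $i\in\mathbb Z$.
   Context: For $l\in\frac12\mathbb N$, $\mathfrak g^{(l)}$ is the complex Lie algebra with basis $e,h,f,p_0,\dots,p_{2l}$ and brackets $[h,e]=2e$, $[h,f]=-2f$, $[e,f]=h$, $[h,p_k]=2(l-k)p_k$, $[e,p_k]=kp_{k-1}$, $[f,p_k]=(2l-k)p_{k+1}$ ($p_{-1}=p_{2l+1}=0$), $[p_k,p_{k'}]=0$. $\mathcal H=\mathrm{span}\{p_0,\dots,p_{2l}\}$. A weight module is one on which $h$ acts diagonalizably, $V_\lambda=\{v:hv=\lambda v\}$, $\mathrm{supp}(V)=\{\lambda:V_\lambda\ne0\}$. A highest (resp. lowest) weight module is one generated by a weight vector $v$ annihilated by $e$ and all $p_k$ with $k<l$ (resp. by $f$ and all $p_k$ with $k>l$), which for $l\in\mathbb N$ is moreover an eigenvector of $p_l$. *)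

theory Defs
  imports "HOL-Analysis.Analysis"
begin

text \<open>Modules over g^(l), with n = 2l.  The module is the whole type 'v, a complex
  vector space with scalar multiplication s.  The action is given by the operators
  E, H, F and P k (k = 0..n).\<close>

definition gmod :: "nat \<Rightarrow> (complex \<Rightarrow> 'v::ab_group_add \<Rightarrow> 'v) \<Rightarrow> ('v \<Rightarrow> 'v) \<Rightarrow> ('v \<Rightarrow> 'v)
    \<Rightarrow> ('v \<Rightarrow> 'v) \<Rightarrow> (nat \<Rightarrow> 'v \<Rightarrow> 'v) \<Rightarrow> bool" where
  "gmod n s E H F P \<longleftrightarrow>
     vector_space s \<and>
     Vector_Spaces.linear s s E \<and> Vector_Spaces.linear s s H \<and> Vector_Spaces.linear s s F \<and>
     (\<forall>k\<le>n. Vector_Spaces.linear s s (P k)) \<and>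
     (\<forall>v. H (E v) - E (H v) = s 2 (E v)) \<and>
     (\<forall>v. H (F v) - F (H v) = s (-2) (F v)) \<and>
     (\<forall>v. E (F v) - F (E v) = H v) \<and>
     (\<forall>k\<le>n. \<forall>v. H (P k v) - P k (H v) = s (of_int (int n - 2 * int k)) (P k v)) \<and>
     (\<forall>k\<le>n. \<forall>v. E (P k v) - P k (E v) = (if k = 0 then 0 else s (of_nat k) (P (k - 1) v))) \<and>
     (\<forall>k\<le>n. \<forall>v. F (P k v) - P k (F v) = (if k = n then 0 else s (of_nat (n - k)) (P (k + 1) v))) \<and>
     (\<forall>k\<le>n. \<forall>k'\<le>n. \<forall>v. P k (P k' v) = P k' (P k v))"

definition submod :: "nat \<Rightarrow> (complex \<Rightarrow> 'v::ab_group_add \<Rightarrow> 'v) \<Rightarrow> ('v \<Rightarrow> 'v) \<Rightarrow> ('v \<Rightarrow> 'v)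
    \<Rightarrow> ('v \<Rightarrow> 'v) \<Rightarrow> (nat \<Rightarrow> 'v \<Rightarrow> 'v) \<Rightarrow> 'v set \<Rightarrow> bool" where
  "submod n s E H F P W \<longleftrightarrow> module.subspace s W \<and> E ` W \<subseteq> W \<and> H ` W \<subseteq> W \<and> F ` W \<subseteq> W \<and>
     (\<forall>k\<le>n. P k ` W \<subseteq> W)"

definition simple_mod :: "nat \<Rightarrow> (complex \<Rightarrow> 'v::ab_group_add \<Rightarrow> 'v) \<Rightarrow> ('v \<Rightarrow> 'v) \<Rightarrow> ('v \<Rightarrow> 'v)
    \<Rightarrow> ('v \<Rightarrow> 'v) \<Rightarrow> (nat \<Rightarrow> 'v \<Rightarrow> 'v) \<Rightarrow> bool" where
  "simple_mod n s E H F P \<longleftrightarrow> (\<exists>v::'v. v \<noteq> 0) \<and>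
     (\<forall>W. submod n s E H F P W \<longrightarrow> W = {0} \<or> W = UNIV)"

definition generated_by :: "nat \<Rightarrow> (complex \<Rightarrow> 'v::ab_group_add \<Rightarrow> 'v) \<Rightarrow> ('v \<Rightarrow> 'v) \<Rightarrow> ('v \<Rightarrow> 'v)
    \<Rightarrow> ('v \<Rightarrow> 'v) \<Rightarrow> (nat \<Rightarrow> 'v \<Rightarrow> 'v) \<Rightarrow> 'v \<Rightarrow> bool" where
  "generated_by n s E H F P v \<longleftrightarrow> \<Inter>{W. submod n s E H F P W \<and> v \<in> W} = UNIV"

definition wspace :: "(complex \<Rightarrow> 'v::ab_group_add \<Rightarrow> 'v) \<Rightarrow> ('v \<Rightarrow> 'v) \<Rightarrow> complex \<Rightarrow> 'v set" where
  "wspace s H \<mu> = {v. H v = s \<mu> v}"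

definition supp :: "(complex \<Rightarrow> 'v::ab_group_add \<Rightarrow> 'v) \<Rightarrow> ('v \<Rightarrow> 'v) \<Rightarrow> complex set" where
  "supp s H = {\<mu>. wspace s H \<mu> \<noteq> {0}}"

definition weight_mod :: "(complex \<Rightarrow> 'v::ab_group_add \<Rightarrow> 'v) \<Rightarrow> ('v \<Rightarrow> 'v) \<Rightarrow> bool" where
  "weight_mod s H \<longleftrightarrow> (\<forall>v. v \<in> module.span s (\<Union>\<mu>. wspace s H \<mu>))"

definition highest_mod :: "nat \<Rightarrow> (complex \<Rightarrow> 'v::ab_group_add \<Rightarrow> 'v) \<Rightarrow> ('v \<Rightarrow> 'v) \<Rightarrow> ('v \<Rightarrow> 'v)
    \<Rightarrow> ('v \<Rightarrow> 'v) \<Rightarrow> (nat \<Rightarrow> 'v \<Rightarrow> 'v) \<Rightarrow> bool" where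
  "highest_mod n s E H F P \<longleftrightarrow> (\<exists>v \<mu>. v \<noteq> 0 \<and> H v = s \<mu> v \<and> E v = 0 \<and>
     (\<forall>k\<le>n. 2 * k < n \<longrightarrow> P k v = 0) \<and>
     (even n \<longrightarrow> (\<exists>c. P (n div 2) v = s c v)) \<and>
     generated_by n s E H F P v)"

definition lowest_mod :: "nat \<Rightarrow> (complex \<Rightarrow> 'v::ab_group_add \<Rightarrow> 'v) \<Rightarrow> ('v \<Rightarrow> 'v) \<Rightarrow> ('v \<Rightarrow> 'v)
    \<Rightarrow> ('v \<Rightarrow> 'v) \<Rightarrow> (nat \<Rightarrow> 'v \<Rightarrow> 'v) \<Rightarrow> bool" where
  "lowest_mod n s E H F P \<longleftrightarrow> (\<exists>v \<mu>. v \<noteq> 0 \<and> H v = s \<mu> v \<and> F v = 0 \<and>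
     (\<forall>k\<le>n. n < 2 * k \<longrightarrow> P k v = 0) \<and>
     (even n \<longrightarrow> (\<exists>c. P (n div 2) v = s c v)) \<and>
     generated_by n s E H F P v)"

definition fin_dim :: "(complex \<Rightarrow> 'v::ab_group_add \<Rightarrow> 'v) \<Rightarrow> 'v set \<Rightarrow> bool" where
  "fin_dim s S \<longleftrightarrow> (\<exists>B. finite B \<and> S \<subseteq> module.span s B)"

end

theory Submission
  imports Defs "HOL-Computational_Algebra.Fundamental_Theorem_Algebra"
begin


locale GM =
  fixes n :: nat and s :: "complex \<Rightarrow> 'v::ab_group_add \<Rightarrow> 'v"
    and E H F :: "'v \<Rightarrow> 'v" and P :: "nat \<Rightarrow> 'v \<Rightarrow> 'v"
  assumes gm: "gmod n s E H F P"
begin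

lemma vs: "vector_space s" using gm by (simp add: gmod_def)
sublocale vector_space s by (rule vs)

definition lin :: "('v \<Rightarrow> 'v) \<Rightarrow> bool" where "lin T \<longleftrightarrow> Vector_Spaces.linear s s T"

lemma lin_mh: "lin T \<Longrightarrow> module_hom s s T"
  by (simp add: lin_def module_hom_iff_linear)
lemma lin_add: "lin T \<Longrightarrow> T (x + y) = T x + T y" using lin_mh module_hom.add by blast
lemma lin_scale: "lin T \<Longrightarrow> T (s c x) = s c (T x)" using lin_mh module_hom.scale by blast
lemma lin_zero: "lin T \<Longrightarrow> T 0 = 0" using lin_mh module_hom.zero by blast
lemma lin_neg: "lin T \<Longrightarrow> T (- x) = - T x" using lin_mh module_hom.neg by blast
lemma lin_diff: "lin T \<Longrightarrow> T (x - y) = T x - T y" using lin_mh module_hom.diff by blast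
lemma lin_sum: "lin T \<Longrightarrow> T (sum g A) = (\<Sum>a\<in>A. T (g a))" using lin_mh module_hom.sum by blast
lemma linI: "(\<And>x y. T (x + y) = T x + T y) \<Longrightarrow> (\<And>c x. T (s c x) = s c (T x)) \<Longrightarrow> lin T"
  unfolding lin_def Vector_Spaces.linear_iff using vs by auto
lemma lin_comp: "lin T \<Longrightarrow> lin U \<Longrightarrow> lin (\<lambda>v. T (U v))"
  by (rule linI) (simp_all add: lin_add lin_scale)
lemma lin_comp': "lin T \<Longrightarrow> lin U \<Longrightarrow> lin (T \<circ> U)"
  using lin_comp by (simp add: comp_def)
lemma lin_id: "lin (\<lambda>v. v)" by (rule linI) auto
lemma lin_pow: "lin T \<Longrightarrow> lin (T ^^ k)"
  by (induction k) (auto simp: lin_id[unfolded id_def] id_def intro: lin_comp') 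
lemma lin_shift: "lin T \<Longrightarrow> lin (\<lambda>v. T v - s c v)"
  by (rule linI) (simp_all add: lin_add lin_scale scale_right_distrib scale_right_diff_distrib scale_left_commute algebra_simps)
lemma lin_negop: "lin T \<Longrightarrow> lin (\<lambda>v. - T v)"
  by (rule linI) (simp_all add: lin_add lin_scale)
lemma lin_inj: "lin T \<Longrightarrow> inj T \<longleftrightarrow> (\<forall>x. T x = 0 \<longrightarrow> x = 0)"
  using lin_mh module_hom.inj_iff_eq_0 by blast

lemma linE: "lin E" and linH: "lin H" and linF: "lin F" and linP: "k \<le> n \<Longrightarrow> lin (P k)"
  using gm unfolding gmod_def lin_def by blast+

lemma HE: "H (E v) = E (H v) + s 2 (E v)"
proof -
  have "H (E v) - E (H v) = s 2 (E v)" using gm unfolding gmod_def by blast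
  then show ?thesis by (metis diff_eq_eq add.commute)
qed
lemma HF: "H (F v) = F (H v) - s 2 (F v)" 
proof -
  have "H (F v) - F (H v) = s (-2) (F v)" using gm unfolding gmod_def by blast
  then show ?thesis by (simp add: algebra_simps)
qed
lemma EF: "E (F v) = F (E v) + H v"
proof -
  have "E (F v) - F (E v) = H v" using gm unfolding gmod_def by blast
  then show ?thesis by (metis diff_eq_eq add.commute)
qed
lemma HP: "k \<le> n \<Longrightarrow> H (P k v) = P k (H v) + s (of_int (int n - 2 * int k)) (P k v)"
proof -
  assume k: "k \<le> n"
  have "H (P k v) - P k (H v) = s (of_int (int n - 2 * int k)) (P k v)" using gm k unfolding gmod_def by blast
  then show ?thesis by (metis diff_eq_eq add.commute)
qed
lemma EP: "k \<le> n \<Longrightarrow> E (P k v) = P k (E v) + (if k = 0 then 0 else s (of_nat k) (P (k - 1) v))"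
proof -
  assume k: "k \<le> n"
  have "E (P k v) - P k (E v) = (if k = 0 then 0 else s (of_nat k) (P (k - 1) v))" using gm k unfolding gmod_def by blast
  then show ?thesis by (metis diff_eq_eq add.commute)
qed
lemma FP: "k \<le> n \<Longrightarrow> F (P k v) = P k (F v) + (if k = n then 0 else s (of_nat (n - k)) (P (k + 1) v))"
proof -
  assume k: "k \<le> n"
  have "F (P k v) - P k (F v) = (if k = n then 0 else s (of_nat (n - k)) (P (k + 1) v))" using gm k unfolding gmod_def by blast
  then show ?thesis by (metis diff_eq_eq add.commute)
qed
lemma PP: "k \<le> n \<Longrightarrow> k' \<le> n \<Longrightarrow> P k (P k' v) = P k' (P k v)"
  using gm unfolding gmod_def by blast

abbreviation W where "W \<mu> \<equiv> wspace s H \<mu>"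

lemma W_iff: "v \<in> W \<mu> \<longleftrightarrow> H v = s \<mu> v" by (simp add: wspace_def)
lemma W_sub: "subspace (W \<mu>)"
  unfolding subspace_def
  by (auto simp: W_iff lin_add[OF linH] lin_scale[OF linH] lin_zero[OF linH] scale_right_distrib scale_left_commute)
lemma W0: "0 \<in> W \<mu>" using W_sub subspace_0 by blast

lemma E_W: "v \<in> W \<mu> \<Longrightarrow> E v \<in> W (\<mu> + 2)"
  by (simp add: W_iff HE lin_scale[OF linE] algebra_simps)
lemma F_W: "v \<in> W \<mu> \<Longrightarrow> F v \<in> W (\<mu> - 2)"
  by (simp add: W_iff HF lin_scale[OF linF] algebra_simps)
lemma P_W: "k \<le> n \<Longrightarrow> v \<in> W \<mu> \<Longrightarrow> P k v \<in> W (\<mu> + of_int (int n - 2 * int k))"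
  by (simp add: W_iff HP lin_scale[OF linP] algebra_simps)
lemma H_W: "v \<in> W \<mu> \<Longrightarrow> H v \<in> W \<mu>"
  by (simp add: W_iff lin_scale[OF linH])

lemma W_unique: "v \<in> W \<mu> \<Longrightarrow> v \<in> W \<nu> \<Longrightarrow> v \<noteq> 0 \<Longrightarrow> \<mu> = \<nu>"
  by (simp add: W_iff)

end


definition LN :: "('a::zero \<Rightarrow> 'a) \<Rightarrow> 'a set" where "LN T = {v. \<exists>N. (T ^^ N) v = 0}"

context GM begin

lemma funpow_lin_zero: "lin T \<Longrightarrow> (T ^^ N) 0 = 0"
  using lin_pow lin_zero by blast

lemma funpow_comm: "(T ^^ N) (T v) = T ((T ^^ N) v)"
  by (metis funpow_swap1)

lemma funpow_more: "lin T \<Longrightarrow> (T ^^ N) v = 0 \<Longrightarrow> (T ^^ (M + N)) v = 0"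
  by (simp add: funpow_add funpow_lin_zero)

lemma funpow_more': "lin T \<Longrightarrow> (T ^^ N) v = 0 \<Longrightarrow> N \<le> M \<Longrightarrow> (T ^^ M) v = 0"
  by (metis funpow_more le_add_diff_inverse2)

lemma pow_comm_H:
  assumes "lin T" "\<And>v. H (T v) = T (H v) + s a (T v)"
  shows "(T ^^ N) (H v) = H ((T ^^ N) v) - s (of_nat N * a) ((T ^^ N) v)"
proof (induction N)
  case 0 then show ?case by simp
next
  case (Suc N)
  have "(T ^^ Suc N) (H v) = T ((T ^^ N) (H v))" by simp
  also have "\<dots> = T (H ((T ^^ N) v)) - s (of_nat N * a) ((T ^^ Suc N) v)"
    using Suc assms(1) by (simp add: lin_diff lin_scale)
  also have "T (H ((T ^^ N) v)) = H ((T ^^ Suc N) v) - s a ((T ^^ Suc N) v)"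
    using assms(2)[of "(T ^^ N) v"] by (simp add: algebra_simps)
  finally show ?case by (simp add: algebra_simps scale_left_distrib)
qed

lemma scale_Suc: "s (of_nat (Suc m)) y = s (of_nat m) y + y"
  by (simp add: scale_left_distrib)

lemma pow_comm_XY:
  assumes T: "lin T" and XY: "\<And>v. T (X v) = X (T v) + Y v" and TY: "\<And>v. T (Y v) = Y (T v)"
  shows "(T ^^ Suc N) (X v) = X ((T ^^ Suc N) v) + s (of_nat (Suc N)) (Y ((T ^^ N) v))"
proof (induction N arbitrary: v)
  case 0 then show ?case using XY by simp
next
  case (Suc N)
  have TNY: "(T ^^ K) (Y w) = Y ((T ^^ K) w)" for K w
    by (induction K) (simp_all add: TY)
  have e1: "(T ^^ Suc (Suc N)) (X v) = (T ^^ Suc N) (T (X v))" by (simp only: funpow_Suc_right comp_def)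
  have e2: "(T ^^ Suc N) (T (X v)) = (T ^^ Suc N) (X (T v)) + (T ^^ Suc N) (Y v)"
    using XY lin_pow[OF T] lin_add by metis
  have e3: "(T ^^ Suc N) (X (T v)) = X ((T ^^ Suc (Suc N)) v) + s (of_nat (Suc N)) (Y ((T ^^ Suc N) v))"
    using Suc[of "T v"] by (simp only: funpow_Suc_right comp_def)
  have e4: "(T ^^ Suc N) (Y v) = Y ((T ^^ Suc N) v)" by (rule TNY)
  have "(T ^^ Suc (Suc N)) (X v) = X ((T ^^ Suc (Suc N)) v) + (s (of_nat (Suc N)) (Y ((T ^^ Suc N) v)) + Y ((T ^^ Suc N) v))"
    using e1 e2 e3 e4 by (simp only: add.assoc)
  then show ?case by (simp only: scale_Suc[of "Suc N"])
qed

lemma pow_kill_X: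
  assumes T: "lin T" and XY: "\<And>v. T (X v) = X (T v) + Y v" and TY: "\<And>v. T (Y v) = Y (T v)"
    and X0: "X 0 = 0" and Y0: "Y 0 = 0" and v: "(T ^^ M) v = 0"
  shows "(T ^^ Suc M) (X v) = 0"
proof -
  have "(T ^^ Suc M) (X v) = X ((T ^^ Suc M) v) + s (of_nat (Suc M)) (Y ((T ^^ M) v))"
    by (rule pow_comm_XY[where T=T and X=X and Y=Y, OF T XY TY])
  moreover have "(T ^^ Suc M) v = 0" using funpow_more[OF T v, of 1] by simp
  ultimately show ?thesis using v X0 Y0 by simp
qed

end

locale SGM = GM n s E H F P for n s E H F P +
  fixes lam :: complex
  assumes simple: "simple_mod n s E H F P" and wm: "weight_mod s H"
    and suppZ: "\<forall>\<mu>\<in>supp s H. \<mu> - lam \<in> \<int>"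
    and lamne: "wspace s H lam \<noteq> {0}" and lamfd: "fin_dim s (wspace s H lam)"
    and HV: "\<exists>k\<le>n. \<exists>v. P k v \<noteq> 0"
begin

lemma submod_triv:
  assumes "subspace U" "\<And>v. v \<in> U \<Longrightarrow> E v \<in> U" "\<And>v. v \<in> U \<Longrightarrow> H v \<in> U"
    "\<And>v. v \<in> U \<Longrightarrow> F v \<in> U" "\<And>k v. k \<le> n \<Longrightarrow> v \<in> U \<Longrightarrow> P k v \<in> U"
  shows "U = {0} \<or> U = UNIV"
proof -
  have "submod n s E H F P U" unfolding submod_def using assms by blast
  then show ?thesis using simple unfolding simple_mod_def by blast
qed

lemma submod_univ:
  assumes "subspace U" "\<And>v. v \<in> U \<Longrightarrow> E v \<in> U" "\<And>v. v \<in> U \<Longrightarrow> H v \<in> U"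
    "\<And>v. v \<in> U \<Longrightarrow> F v \<in> U" "\<And>k v. k \<le> n \<Longrightarrow> v \<in> U \<Longrightarrow> P k v \<in> U"
    "x \<in> U" "x \<noteq> 0"
  shows "U = UNIV"
  using submod_triv[OF assms(1-5)] assms(6,7) by blast

lemma gen_by: "v \<noteq> 0 \<Longrightarrow> generated_by n s E H F P v"
  unfolding generated_by_def
proof -
  assume v: "v \<noteq> 0"
  have "\<And>U. submod n s E H F P U \<Longrightarrow> v \<in> U \<Longrightarrow> U = UNIV"
    using simple v unfolding simple_mod_def by blast
  then show "\<Inter> {U. submod n s E H F P U \<and> v \<in> U} = UNIV" by blast
qed

lemma K0: "v \<noteq> 0 \<Longrightarrow> \<exists>k\<le>n. P k v \<noteq> 0"
proof (rule ccontr)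
  assume v: "v \<noteq> 0" and nk: "\<not> (\<exists>k\<le>n. P k v \<noteq> 0)"
  define U where "U = {v. \<forall>k\<le>n. P k v = 0}"
  have sub: "subspace U" unfolding subspace_def U_def
    by (auto simp: lin_add[OF linP] lin_scale[OF linP] lin_zero[OF linP])
  have "U = UNIV"
  proof (rule submod_univ[OF sub _ _ _ _ _ v])
    show "v \<in> U" using nk U_def by auto
  next
    fix w assume w: "w \<in> U"
    show "E w \<in> U" unfolding U_def mem_Collect_eq
    proof (intro allI impI)
      fix k assume k: "k \<le> n"
      have "E (P k w) = P k (E w) + (if k = 0 then 0 else s (of_nat k) (P (k - 1) w))" using EP[OF k] .
      moreover have "P k w = 0" "k \<noteq> 0 \<longrightarrow> P (k - 1) w = 0" using w k U_def by auto
      ultimately show "P k (E w) = 0" using lin_zero[OF linE] by (auto split: if_splits)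
    qed
    show "F w \<in> U" unfolding U_def mem_Collect_eq
    proof (intro allI impI)
      fix k assume k: "k \<le> n"
      have "F (P k w) = P k (F w) + (if k = n then 0 else s (of_nat (n - k)) (P (k + 1) w))" using FP[OF k] .
      moreover have "P k w = 0" "k \<noteq> n \<longrightarrow> P (k + 1) w = 0" using w k U_def by auto
      ultimately show "P k (F w) = 0" using lin_zero[OF linF] by (auto split: if_splits)
    qed
    show "H w \<in> U" unfolding U_def mem_Collect_eq
    proof (intro allI impI)
      fix k assume k: "k \<le> n"
      have "H (P k w) = P k (H w) + s (of_int (int n - 2 * int k)) (P k w)" using HP[OF k] .
      moreover have "P k w = 0" using w k U_def by auto
      ultimately show "P k (H w) = 0" using lin_zero[OF linH] by simp
    qed
  next
    fix j w assume j: "j \<le> n" and w: "w \<in> U"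
    show "P j w \<in> U" unfolding U_def using w j PP lin_zero[OF linP] U_def by auto
  qed
  then show False using HV U_def by auto
qed


lemma LN_sub: assumes T: "lin T" shows "subspace (LN T)"
  unfolding subspace_def
proof (intro conjI ballI allI)
  show "0 \<in> LN T" unfolding LN_def using funpow_lin_zero[OF T] by blast
next
  fix x y assume "x \<in> LN T" "y \<in> LN T"
  then obtain N M where "(T ^^ N) x = 0" "(T ^^ M) y = 0" unfolding LN_def by auto
  then have "(T ^^ (N + M)) x = 0" "(T ^^ (N + M)) y = 0"
    using funpow_more[OF T] by (metis add.commute)+
  then have "(T ^^ (N + M)) (x + y) = 0" using lin_add[OF lin_pow[OF T]] by simp
  then show "x + y \<in> LN T" unfolding LN_def by blast
next
  fix c x assume "x \<in> LN T"
  then obtain N where "(T ^^ N) x = 0" unfolding LN_def by auto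
  then show "s c x \<in> LN T" unfolding LN_def using lin_scale[OF lin_pow[OF T]] by auto
qed

lemma E_pow_H: "(E ^^ N) (H v) = H ((E ^^ N) v) - s (of_nat N * 2) ((E ^^ N) v)"
  by (rule pow_comm_H[OF linE]) (simp add: HE)

lemma E_kill_F: "(E ^^ M) v = 0 \<Longrightarrow> (E ^^ Suc M) (F v) = 0"
proof (induction M arbitrary: v)
  case 0 then show ?case by (simp add: lin_zero[OF linF] lin_zero[OF linE])
next
  case (Suc M)
  have "(E ^^ Suc (Suc M)) (F v) = (E ^^ Suc M) (E (F v))" by (simp add: funpow_comm)
  also have "\<dots> = (E ^^ Suc M) (F (E v)) + (E ^^ Suc M) (H v)"
    by (simp add: EF lin_add[OF lin_pow[OF linE]] del: funpow.simps)
  also have "(E ^^ Suc M) (F (E v)) = 0" using Suc.IH[of "E v"] Suc.prems by (simp add: funpow_comm)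
  also have "(E ^^ Suc M) (H v) = 0" using Suc.prems by (simp add: E_pow_H lin_zero[OF linH] del: funpow.simps)
  finally show ?case by simp
qed

lemma E_kill_P: "k \<le> n \<Longrightarrow> (E ^^ M) v = 0 \<Longrightarrow> (E ^^ (M + k)) (P k v) = 0"
proof (induction k arbitrary: M v)
  case 0
  have "(E ^^ M) (P 0 v) = P 0 ((E ^^ M) v)"
    by (induction M) (simp_all add: EP)
  then show ?case using 0 lin_zero[OF linP] by simp
next
  case (Suc k)
  note outer = Suc.IH
  show ?case using Suc.prems
  proof (induction M arbitrary: v)
    case 0 then show ?case by (simp add: lin_zero[OF linP] funpow_lin_zero[OF linE] lin_zero[OF linE])
  next
    case (Suc M)
    have kn: "Suc k \<le> n" using Suc.prems by simp
    have "(E ^^ (Suc M + Suc k)) (P (Suc k) v) = (E ^^ (M + Suc k)) (E (P (Suc k) v))"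
      by (simp add: funpow_comm)
    also have "\<dots> = (E ^^ (M + Suc k)) (P (Suc k) (E v)) + (E ^^ (M + Suc k)) (s (of_nat (Suc k)) (P k v))"
      using EP[OF kn, of v] lin_add[OF lin_pow[OF linE]] lin_add[OF linE] by simp
    also have "(E ^^ (M + Suc k)) (P (Suc k) (E v)) = 0"
      using Suc.IH[of "E v"] Suc.prems kn by (simp add: funpow_comm)
    also have "(E ^^ (M + Suc k)) (s (of_nat (Suc k)) (P k v)) = 0"
      using outer[of "Suc M" v] Suc.prems kn lin_scale[OF lin_pow[OF linE]] lin_scale[OF linE] by simp
    finally show ?case by simp
  qed
qed

lemma LN_E_univ: "LN E \<noteq> {0} \<Longrightarrow> LN E = UNIV"
proof -
  assume ne: "LN E \<noteq> {0}"
  have sub: "subspace (LN E)" by (rule LN_sub[OF linE])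
  have "LN E = {0} \<or> LN E = UNIV"
  proof (rule submod_triv[OF sub])
    fix v assume "v \<in> LN E"
    then obtain N where N: "(E ^^ N) v = 0" unfolding LN_def by auto
    show "E v \<in> LN E" unfolding LN_def using N by (intro CollectI exI[of _ N]) (simp add: funpow_comm lin_zero[OF linE])
    show "H v \<in> LN E" unfolding LN_def using N E_pow_H[of N v] lin_zero[OF linH] by auto
    show "F v \<in> LN E" unfolding LN_def using E_kill_F[OF N] by blast
    fix k assume "k \<le> n"
    then show "P k v \<in> LN E" unfolding LN_def using E_kill_P N by blast
  qed
  then show ?thesis using ne by blast
qed

end


context GM begin

definition papp :: "('v \<Rightarrow> 'v) \<Rightarrow> complex poly \<Rightarrow> 'v \<Rightarrow> 'v" where
  "papp T q = fold_coeffs (\<lambda>a g v. s a v + T (g v)) q (\<lambda>v. 0)"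

lemma papp_0[simp]: "papp T 0 v = 0" by (simp add: papp_def)

lemma papp_pCons: assumes T: "lin T" shows "papp T (pCons a q) v = s a v + T (papp T q v)"
proof (cases "a = 0 \<and> q = 0")
  case True then show ?thesis by (simp add: lin_zero[OF T])
next
  case False
  have "fold_coeffs f (pCons a q) = f a \<circ> fold_coeffs f q" for f :: "complex \<Rightarrow> ('v \<Rightarrow> 'v) \<Rightarrow> ('v \<Rightarrow> 'v)"
    using False by (cases "a = 0") simp_all
  then show ?thesis unfolding papp_def by simp
qed

lemma papp_add: assumes T: "lin T" shows "papp T (p + q) v = papp T p v + papp T q v"
proof (induction p q rule: poly_induct2)
  case 0 then show ?case by simp
next
  case (pCons a p b q)
  then show ?case by (simp add: papp_pCons[OF T] lin_add[OF T] scale_left_distrib add_ac)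
qed

lemma papp_smult: assumes T: "lin T" shows "papp T (smult c q) v = s c (papp T q v)"
proof (induction q)
  case 0 then show ?case by simp
next
  case (pCons a p)
  then show ?case by (simp add: papp_pCons[OF T] lin_scale[OF T] scale_right_distrib)
qed

lemma papp_mult: assumes T: "lin T" shows "papp T (p * q) v = papp T p (papp T q v)"
proof (induction p)
  case 0 then show ?case by simp
next
  case (pCons a p)
  then show ?case by (simp add: papp_pCons[OF T] papp_add[OF T] papp_smult[OF T] lin_zero[OF T])
qed

lemma papp_monom: assumes T: "lin T" shows "papp T (monom 1 i) v = (T ^^ i) v"
  by (induction i) (simp_all add: monom_0 monom_Suc papp_pCons[OF T] lin_zero[OF T])

lemma papp_lin_factor: assumes T: "lin T" shows "papp T [:-r, 1:] u = T u - s r u"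
  by (simp add: papp_pCons[OF T] lin_zero[OF T])

lemma papp_minus: assumes T: "lin T" shows "papp T (- q) v = - papp T q v"
  using papp_smult[OF T, of "-1" q v] by simp

lemma eig_from_poly:
  assumes T: "lin T"
  shows "q \<noteq> 0 \<Longrightarrow> papp T q w = 0 \<Longrightarrow> w \<noteq> 0 \<Longrightarrow> \<exists>u c. u \<noteq> 0 \<and> T u = s c u"
proof (induction "degree q" arbitrary: q rule: less_induct)
  case less
  show ?case
  proof (cases "degree q = 0")
    case True
    then obtain a where q: "q = pCons a 0" by (rule degree_eq_zeroE)
    then have "a \<noteq> 0" using less by auto
    then show ?thesis using less q by (simp add: papp_pCons[OF T] lin_zero[OF T])
  next
    case False
    then have "\<not> constant (poly q)" by (simp add: constant_degree)
    then obtain r where "poly q r = 0" using fundamental_theorem_of_algebra by blast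
    then have "[:-r, 1:] dvd q" by (simp add: poly_eq_0_iff_dvd)
    then obtain q' where q': "q = [:-r, 1:] * q'" by (rule dvdE)
    have q'0: "q' \<noteq> 0" using less q' by auto
    have "degree q = degree [:-r, 1:] + degree q'" unfolding q' by (rule degree_mult_eq) (use q'0 in auto)
    then have dq: "degree q = Suc (degree q')" by simp
    define u where "u = papp T q' w"
    have "papp T q w = papp T [:-r, 1:] u" unfolding q' u_def by (rule papp_mult[OF T])
    also have "\<dots> = T u - s r u" by (rule papp_lin_factor[OF T])
    finally have "papp T q w = T u - s r u" .
    then have Tu: "T u = s r u" using less by simp
    show ?thesis
    proof (cases "u = 0")
      case False then show ?thesis using Tu by blast
    next
      case True
      then show ?thesis using less(1)[of q'] dq q'0 less(4) u_def by simp
    qed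
  qed
qed

lemma span_pow_poly:
  assumes T: "lin T" and k: "0 < k"
  shows "span ((\<lambda>i. (T ^^ i) w) ` {..<k}) \<subseteq> {papp T q w | q. degree q < k}"
proof (rule span_minimal)
  show "(\<lambda>i. (T ^^ i) w) ` {..<k} \<subseteq> {papp T q w |q. degree q < k}"
  proof
    fix x assume "x \<in> (\<lambda>i. (T ^^ i) w) ` {..<k}"
    then obtain i where i: "i < k" "x = (T ^^ i) w" by auto
    then have "x = papp T (monom 1 i) w" "degree (monom (1::complex) i) < k"
      by (simp_all add: papp_monom[OF T] degree_monom_eq)
    then show "x \<in> {papp T q w |q. degree q < k}" by blast
  qed
  show "subspace {papp T q w |q. degree q < k}"
    unfolding subspace_def
  proof (intro conjI ballI allI)
    show "0 \<in> {papp T q w |q. degree q < k}" using k by (intro CollectI exI[of _ 0]) simp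
  next
    fix x y assume "x \<in> {papp T q w |q. degree q < k}" "y \<in> {papp T q w |q. degree q < k}"
    then obtain p q where "x = papp T p w" "y = papp T q w" "degree p < k" "degree q < k" by auto
    moreover then have "degree (p + q) < k"
      by (meson degree_add_le_max le_less_trans max_less_iff_conj)
    ultimately show "x + y \<in> {papp T q w |q. degree q < k}"
      by (intro CollectI exI[of _ "p + q"]) (simp add: papp_add[OF T])
  next
    fix c x assume "x \<in> {papp T q w |q. degree q < k}"
    then obtain q where "x = papp T q w" "degree q < k" by auto
    moreover then have "degree (smult c q) < k" using degree_smult_le le_less_trans by blast
    ultimately show "s c x \<in> {papp T q w |q. degree q < k}"
      by (intro CollectI exI[of _ "smult c q"]) (simp add: papp_smult[OF T])
  qed
qed

lemma eigen_exists:
  assumes T: "lin T" and X: "subspace X" and TX: "\<And>x. x \<in> X \<Longrightarrow> T x \<in> X"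
    and fd: "fin_dim s X" and ne: "X \<noteq> {0}"
  shows "\<exists>u c. u \<noteq> 0 \<and> T u = s c u"
proof -
  obtain B where B: "finite B" "X \<subseteq> span B" using fd unfolding fin_dim_def by blast
  obtain w where w: "w \<in> X" "w \<noteq> 0" using ne X subspace_0 by blast
  define g where "g i = (T ^^ i) w" for i
  have gX: "g i \<in> X" for i unfolding g_def by (induction i) (simp_all add: w TX)
  have "\<exists>k\<le>card B. g k \<in> span (g ` {..<k})"
  proof (rule ccontr)
    assume nk: "\<not> (\<exists>k\<le>card B. g k \<in> span (g ` {..<k}))"
    have ind: "k \<le> Suc (card B) \<Longrightarrow> independent (g ` {..<k}) \<and> card (g ` {..<k}) = k" for k
    proof (induction k)
      case 0 then show ?case using independent_empty by simp
    next
      case (Suc k)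
      then have IH: "independent (g ` {..<k})" "card (g ` {..<k}) = k" by auto
      have gk: "g k \<notin> span (g ` {..<k})" using nk Suc.prems by auto
      then have gk': "g k \<notin> g ` {..<k}" by (meson span_base)
      have eq: "g ` {..<Suc k} = insert (g k) (g ` {..<k})" by (simp add: lessThan_Suc)
      show ?case unfolding eq using IH gk gk' by (simp add: independent_insert)
    qed
    from ind[of "Suc (card B)"] have i1: "independent (g ` {..<Suc (card B)})" and
      i2: "card (g ` {..<Suc (card B)}) = Suc (card B)" by auto
    have "g ` {..<Suc (card B)} \<subseteq> span B" using gX B by blast
    then have "card (g ` {..<Suc (card B)}) \<le> card B" using independent_span_bound[OF B(1) i1] by blast
    then show False using i2 by simp
  qed
  then obtain k where k: "g k \<in> span (g ` {..<k})" by blast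
  have k0: "0 < k"
  proof (rule ccontr)
    assume "\<not> 0 < k" then have "k = 0" by simp
    then show False using k w by (simp add: g_def)
  qed
  obtain q where q: "g k = papp T q w" "degree q < k"
    using span_pow_poly[OF T k0, of w] k unfolding g_def by blast
  define r where "r = monom 1 k + (- q)"
  have "coeff r k = 1" using q by (simp add: r_def coeff_eq_0)
  then have r0: "r \<noteq> 0" by auto
  have "papp T r w = papp T (monom 1 k) w + papp T (- q) w" unfolding r_def by (rule papp_add[OF T])
  also have "\<dots> = g k + - g k" using q(1) by (simp add: papp_monom[OF T] papp_minus[OF T] g_def)
  finally have "papp T r w = 0" by simp
  then show ?thesis using eig_from_poly[OF T r0] w by blast
qed

end


definition kap :: "complex \<Rightarrow> nat \<Rightarrow> complex" where
  "kap \<nu> a = (\<Prod>i<a. of_nat (Suc i) * (\<nu> - of_nat i))"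

lemma kap_Suc: "kap \<nu> (Suc a) = kap \<nu> a * (of_nat (Suc a) * (\<nu> - of_nat a))"
  by (simp add: kap_def)

lemma kap_nz: "(\<And>i. i < a \<Longrightarrow> \<nu> \<noteq> of_nat i) \<Longrightarrow> kap \<nu> a \<noteq> 0"
proof (induction a)
  case 0 then show ?case by (simp add: kap_def)
next
  case (Suc a)
  then have "kap \<nu> a \<noteq> 0" "\<nu> - of_nat a \<noteq> 0" by auto
  then show ?case by (simp add: kap_Suc del: of_nat_Suc)
qed

context GM begin

lemma last_nonzero:
  assumes "v \<noteq> 0" "(T ^^ N) v = 0"
  shows "\<exists>j. (T ^^ j) v \<noteq> 0 \<and> T ((T ^^ j) v) = 0"
  using assms
proof (induction N)
  case 0 then show ?case by simp
next
  case (Suc N)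
  show ?case
  proof (cases "(T ^^ N) v = 0")
    case True then show ?thesis using Suc by blast
  next
    case False then show ?thesis using Suc.prems(2) by (intro exI[of _ N]) simp
  qed
qed

lemma W_cong: "v \<in> W a \<Longrightarrow> a = b \<Longrightarrow> v \<in> W b" by simp

lemma E_pow_W: "v \<in> W \<mu> \<Longrightarrow> (E ^^ j) v \<in> W (\<mu> + 2 * of_nat j)"
proof (induction j)
  case 0 then show ?case by simp
next
  case (Suc j)
  show ?case unfolding funpow.simps comp_def by (rule W_cong[OF E_W[OF Suc.IH[OF Suc.prems]]]) simp
qed

lemma F_pow_W: "v \<in> W \<mu> \<Longrightarrow> (F ^^ j) v \<in> W (\<mu> - 2 * of_nat j)"
proof (induction j)
  case 0 then show ?case by simp
next
  case (Suc j)
  show ?case unfolding funpow.simps comp_def by (rule W_cong[OF F_W[OF Suc.IH[OF Suc.prems]]]) simp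
qed

lemma sl2_EF:
  assumes Ew: "E w = 0" and w: "w \<in> W \<nu>"
  shows "E ((F ^^ Suc a) w) = s (of_nat (Suc a) * (\<nu> - of_nat a)) ((F ^^ a) w)"
proof (induction a)
  case 0
  have "E (F w) = F (E w) + H w" by (rule EF)
  also have "\<dots> = s \<nu> w" using Ew w by (simp add: W_iff lin_zero[OF linF])
  finally show ?case by simp
next
  case (Suc a)
  define x where "x = (F ^^ Suc a) w"
  have Hx: "H x = s (\<nu> - 2 * of_nat (Suc a)) x" using F_pow_W[OF w, of "Suc a"] by (simp add: W_iff x_def)
  have "E ((F ^^ Suc (Suc a)) w) = E (F x)" by (simp add: x_def)
  also have "\<dots> = F (E x) + H x" by (rule EF)
  also have "E x = s (of_nat (Suc a) * (\<nu> - of_nat a)) ((F ^^ a) w)" using Suc by (simp add: x_def)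
  also have "F (s (of_nat (Suc a) * (\<nu> - of_nat a)) ((F ^^ a) w)) = s (of_nat (Suc a) * (\<nu> - of_nat a)) x"
    by (simp add: x_def lin_scale[OF linF])
  finally have "E ((F ^^ Suc (Suc a)) w) = s (of_nat (Suc a) * (\<nu> - of_nat a) + (\<nu> - 2 * of_nat (Suc a))) x"
    using Hx by (simp add: scale_left_distrib)
  also have "of_nat (Suc a) * (\<nu> - of_nat a) + (\<nu> - 2 * of_nat (Suc a)) = of_nat (Suc (Suc a)) * (\<nu> - of_nat (Suc a))"
    by (simp add: algebra_simps)
  finally show ?case by (simp add: x_def)
qed

lemma sl2_EaFa:
  assumes Ew: "E w = 0" and w: "w \<in> W \<nu>"
  shows "(E ^^ a) ((F ^^ a) w) = s (kap \<nu> a) w"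
proof (induction a)
  case 0 then show ?case by (simp add: kap_def)
next
  case (Suc a)
  have "(E ^^ Suc a) ((F ^^ Suc a) w) = (E ^^ a) (E ((F ^^ Suc a) w))"
    by (simp only: funpow_Suc_right comp_def)
  also have "\<dots> = (E ^^ a) (s (of_nat (Suc a) * (\<nu> - of_nat a)) ((F ^^ a) w))"
    by (simp only: sl2_EF[OF Ew w])
  also have "\<dots> = s (of_nat (Suc a) * (\<nu> - of_nat a)) (s (kap \<nu> a) w)"
    by (simp only: lin_scale[OF lin_pow[OF linE]] Suc)
  finally show ?case by (simp add: kap_Suc mult.commute)
qed

lemma sl2_kill:
  assumes Ew: "E w = 0" and w: "w \<in> W \<nu>" and ab: "a < b"
  shows "(E ^^ b) ((F ^^ a) w) = 0"
proof -
  have "(E ^^ Suc a) ((F ^^ a) w) = E ((E ^^ a) ((F ^^ a) w))" by simp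
  also have "\<dots> = 0" by (simp add: sl2_EaFa[OF Ew w] lin_scale[OF linE] Ew)
  finally show ?thesis using funpow_more'[OF linE] ab by (metis Suc_leI)
qed

lemma tri_indep:
  fixes T :: "nat set"
  assumes "finite T" and phi: "\<And>a. a \<in> T \<Longrightarrow> lin (\<phi> a)"
    and tri: "\<And>a b. a \<in> T \<Longrightarrow> b \<in> T \<Longrightarrow> b < a \<Longrightarrow> \<phi> a (u b) = 0"
    and diag: "\<And>a. a \<in> T \<Longrightarrow> \<phi> a (u a) \<noteq> 0"
  shows "independent (u ` T) \<and> card (u ` T) = card T"
  using assms
proof (induction T rule: finite_ranking_induct[where f = "\<lambda>x. x"])
  case empty then show ?case using independent_empty by simp
next
  case (insert x S)
  show ?case
  proof (cases "x \<in> S")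
    case True then show ?thesis using insert by (simp add: insert_absorb)
  next
    case False
    have IH: "independent (u ` S) \<and> card (u ` S) = card S"
      using insert.IH insert.prems by blast
    have lt: "y < x" if "y \<in> S" for y using insert.hyps(2)[OF that] False that by (metis le_neq_implies_less)
    have kill: "\<phi> x z = 0" if z: "z \<in> span (u ` S)" for z
    proof -
      have mh: "module_hom s s (\<phi> x)" using insert.prems(1) lin_mh by blast
      show ?thesis
        by (rule module_hom.eq_0_on_span[OF mh _ z]) (use insert.prems(2) lt in auto)
    qed
    have ux: "u x \<notin> span (u ` S)" using kill insert.prems(3) by blast
    then have ux': "u x \<notin> u ` S" by (meson span_base)
    have "card (u ` insert x S) = Suc (card (u ` S))" using ux' insert.hyps(1) by simp
    then show ?thesis using IH ux False insert.hyps(1) by (simp add: independent_insert)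
  qed
qed

end

context SGM begin

lemma LN_P_univ:
  assumes j: "j \<le> n" and c: "c = 0 \<or> n = 2 * j" and ne: "LN (\<lambda>v. P j v - s c v) \<noteq> {0}"
  shows "LN (\<lambda>v. P j v - s c v) = UNIV"
proof -
  define T where "T = (\<lambda>v. P j v - s c v)"
  have linT: "lin T" unfolding T_def by (rule lin_shift[OF linP[OF j]])
  define a where "a = (of_int (int n - 2 * int j) :: complex)"
  have aT: "s a (P j v) = s a (T v)" for v
    using c by (auto simp: T_def a_def)
  have HT: "H (T v) = T (H v) + s a (T v)" for v
  proof -
    have h1: "H (T v) = P j (H v) + s a (P j v) - s c (H v)"
      by (simp add: T_def lin_diff[OF linH] lin_scale[OF linH] HP[OF j] a_def)
    have h3: "P j (H v) + s a (P j v) - s c (H v) = (P j (H v) - s c (H v)) + s a (P j v)" by (simp add: algebra_simps)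
    have h2: "T (H v) = P j (H v) - s c (H v)" by (simp add: T_def)
    have "H (T v) = T (H v) + s a (P j v)" by (simp only: h1 h3 h2)
    then show ?thesis using aT[of v] by simp
  qed
  have sub: "subspace (LN T)" by (rule LN_sub[OF linT])
  have "LN T = {0} \<or> LN T = UNIV"
  proof (rule submod_triv[OF sub])
    fix v assume "v \<in> LN T"
    then obtain N where N: "(T ^^ N) v = 0" unfolding LN_def by auto
    have NS: "(T ^^ Suc N) v = 0" using funpow_more[OF linT N, of 1] by simp
    show "H v \<in> LN T" unfolding LN_def
      using pow_comm_H[OF linT HT, of N v] N lin_zero[OF linH] by auto
    define Y where "Y = (\<lambda>v. - (if j = 0 then 0 else s (of_nat j) (P (j - 1) v)))"
    have XY: "T (E v) = E (T v) + Y v" for v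
      using EP[OF j, of v] by (simp add: T_def Y_def lin_diff[OF linE] lin_scale[OF linE] algebra_simps)
    have TY: "T (Y v) = Y (T v)" for v
    proof (cases "j = 0")
      case True then show ?thesis using lin_zero[OF linP[OF j]] by (simp add: Y_def T_def)
    next
      case False
      then obtain i where ji: "j = Suc i" by (cases j) auto
      then have i: "i \<le> n" using j by simp
      have Yv: "Y w = - s (of_nat j) (P i w)" for w using ji by (simp add: Y_def)
      show ?thesis
        by (simp add: Yv T_def lin_neg[OF linP[OF j]] lin_scale[OF linP[OF j]] lin_diff[OF linP[OF i]]
            lin_scale[OF linP[OF i]] PP[OF j i] scale_left_commute algebra_simps)
    qed
    have Y0: "Y 0 = 0" using linP[of "j - 1"] j by (simp add: Y_def lin_zero)
    show "E v \<in> LN T" unfolding LN_def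
      using pow_kill_X[OF linT XY TY lin_zero[OF linE] Y0 N] by blast
    define Y' where "Y' = (\<lambda>v. - (if j = n then 0 else s (of_nat (n - j)) (P (j + 1) v)))"
    have XY': "T (F v) = F (T v) + Y' v" for v
      using FP[OF j, of v] by (simp add: T_def Y'_def lin_diff[OF linF] lin_scale[OF linF] algebra_simps)
    have TY': "T (Y' v) = Y' (T v)" for v
    proof (cases "j = n")
      case True then show ?thesis using lin_zero[OF linP[OF j]] by (simp add: Y'_def T_def)
    next
      case False
      then have j1: "j + 1 \<le> n" using j by simp
      have Yv: "Y' w = - s (of_nat (n - j)) (P (j + 1) w)" for w using False by (simp add: Y'_def)
      show ?thesis
        by (simp only: Yv T_def lin_neg[OF linP[OF j]] lin_scale[OF linP[OF j]] lin_diff[OF linP[OF j1]]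
            lin_scale[OF linP[OF j1]] PP[OF j j1]) (simp add: scale_left_commute algebra_simps)
    qed
    have Y'0: "Y' 0 = 0" using linP[of "j + 1"] j by (auto simp: Y'_def lin_zero)
    show "F v \<in> LN T" unfolding LN_def
      using pow_kill_X[OF linT XY' TY' lin_zero[OF linF] Y'0 N] by blast
  next
    fix k v assume k: "k \<le> n" and "v \<in> LN T"
    then obtain N where N: "(T ^^ N) v = 0" unfolding LN_def by auto
    have XY: "T (P k v) = P k (T v) + (\<lambda>v. 0) v" for v
      by (simp add: T_def lin_diff[OF linP[OF k]] lin_scale[OF linP[OF k]] PP[OF j k])
    show "P k v \<in> LN T" unfolding LN_def
      using pow_kill_X[OF linT XY _ lin_zero[OF linP[OF k]] _ N] lin_zero[OF linT] by blast
  qed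
  then show ?thesis using ne T_def by blast
qed

end


context SGM begin

lemma Kset_bound:
  assumes LNE: "LN E = UNIV"
  shows "\<exists>M::nat. \<forall>a w. w \<noteq> 0 \<longrightarrow> w \<in> W (lam + 2 * of_nat a) \<longrightarrow> E w = 0 \<longrightarrow> a \<le> M"
proof -
  obtain B where B: "finite B" "W lam \<subseteq> span B" using lamfd unfolding fin_dim_def by blast
  define a0 :: nat where "a0 = nat \<lceil>- Re lam\<rceil> + 1"
  have nz: "lam + 2 * of_nat a \<noteq> of_nat i" if "a0 \<le> a" "i < a" for a i
  proof
    assume eq: "lam + 2 * of_nat a = of_nat i"
    have "Re (lam + 2 * of_nat a) = Re (of_nat i)" using eq by simp
    then have e1: "Re lam + 2 * real a = real i" by simp
    have e2: "- Re lam \<le> real (nat \<lceil>- Re lam\<rceil>)" by (rule real_nat_ceiling_ge)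
    have e3: "real (nat \<lceil>- Re lam\<rceil>) + 1 \<le> real a" using that(1) unfolding a0_def by simp
    have e4: "real i + 1 \<le> real a" using that(2) by simp
    show False using e1 e2 e3 e4 by linarith
  qed
  define K where "K = {a. a0 \<le> a \<and> (\<exists>w. w \<noteq> 0 \<and> w \<in> W (lam + 2 * of_nat a) \<and> E w = 0)}"
  define wf where "wf a = (SOME w. w \<noteq> 0 \<and> w \<in> W (lam + 2 * of_nat a) \<and> E w = 0)" for a
  have wf: "wf a \<noteq> 0 \<and> wf a \<in> W (lam + 2 * of_nat a) \<and> E (wf a) = 0" if "a \<in> K" for a
  proof -
    have "\<exists>w. w \<noteq> 0 \<and> w \<in> W (lam + 2 * of_nat a) \<and> E w = 0" using that K_def by blast
    then show ?thesis unfolding wf_def by (rule someI_ex)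
  qed
  define u where "u a = (F ^^ a) (wf a)" for a
  have uW: "u a \<in> W lam" if "a \<in> K" for a
    unfolding u_def by (rule W_cong[OF F_pow_W[of "wf a" "lam + 2 * of_nat a" a]]) (use wf[OF that] in auto)
  have cardK: "card T \<le> card B" if T: "finite T" "T \<subseteq> K" for T
  proof -
    have "independent (u ` T) \<and> card (u ` T) = card T"
    proof (rule tri_indep[OF T(1), where \<phi> = "\<lambda>a. E ^^ a"])
      show "lin (E ^^ a)" for a by (rule lin_pow[OF linE])
    next
      fix a b assume ab: "a \<in> T" "b \<in> T" "b < a"
      then have bK: "b \<in> K" using T by auto
      show "(E ^^ a) (u b) = 0" unfolding u_def
        using wf[OF bK] sl2_kill ab(3) by blast
    next
      fix a assume a: "a \<in> T"
      then have aK: "a \<in> K" using T by auto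
      have "(E ^^ a) (u a) = s (kap (lam + 2 * of_nat a) a) (wf a)" unfolding u_def
        using wf[OF aK] sl2_EaFa by blast
      moreover have "kap (lam + 2 * of_nat a) a \<noteq> 0"
        by (rule kap_nz) (use nz aK K_def in auto)
      ultimately show "(E ^^ a) (u a) \<noteq> 0" using wf[OF aK] by simp
    qed
    moreover have "u ` T \<subseteq> span B" using uW T(2) B(2) by blast
    ultimately have "card (u ` T) \<le> card B" using independent_span_bound[OF B(1), of "u ` T"] by blast
    moreover have "card (u ` T) = card T" using \<open>independent (u ` T) \<and> card (u ` T) = card T\<close> by blast
    ultimately show ?thesis by simp
  qed
  have finK: "finite K"
  proof (rule ccontr)
    assume "infinite K"
    then obtain T where T: "finite T" "card T = Suc (card B)" "T \<subseteq> K"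
      using infinite_arbitrarily_large by blast
    then show False using cardK[of T] by simp
  qed
  define M where "M = max a0 (if K = {} then 0 else Max K)"
  show ?thesis
  proof (intro exI allI impI)
    fix a w assume aw: "w \<noteq> 0" "w \<in> W (lam + 2 * of_nat a)" "E w = 0"
    show "a \<le> M"
    proof (cases "a0 \<le> a")
      case True
      then have aK: "a \<in> K" using aw K_def by blast
      then have "a \<le> Max K" using finK by simp
      then show ?thesis using aK unfolding M_def by auto
    next
      case False then show ?thesis unfolding M_def by simp
    qed
  qed
qed

lemma boundA:
  assumes LNE: "LN E = UNIV"
  shows "\<exists>M::int. \<forall>m::int. even m \<longrightarrow> W (lam + of_int m) \<noteq> {0} \<longrightarrow> m \<le> M"
proof -
  obtain M' where M'0: "\<forall>a w. w \<noteq> 0 \<longrightarrow> w \<in> W (lam + 2 * of_nat a) \<longrightarrow> E w = 0 \<longrightarrow> a \<le> M'"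
    using Kset_bound[OF LNE] by (elim exE)
  note M' = M'0[rule_format]
  show ?thesis
  proof (intro exI allI impI)
    fix m :: int assume em: "even m" and ne: "W (lam + of_int m) \<noteq> {0}"
    show "m \<le> 2 * int M'"
    proof (cases "m < 0")
      case True then show ?thesis by simp
    next
      case False
      obtain k where mk: "m = 2 * k" using em by (rule evenE)
      define a where "a = nat k"
      have ma: "m = 2 * int a" using mk False a_def by simp
      obtain v where v: "v \<in> W (lam + of_int m)" "v \<noteq> 0" using ne W0 by blast
      obtain N where "(E ^^ N) v = 0" using LNE unfolding LN_def by blast
      then obtain j where j: "(E ^^ j) v \<noteq> 0" "E ((E ^^ j) v) = 0" using last_nonzero v(2) by blast
      have "(E ^^ j) v \<in> W (lam + 2 * of_nat (a + j))"
        by (rule W_cong[OF E_pow_W[OF v(1)]]) (simp add: ma algebra_simps)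
      then have "a + j \<le> M'" using M' j by blast
      then show ?thesis using ma by simp
    qed
  qed
qed

lemma boundAll:
  assumes LNE: "LN E = UNIV"
  shows "\<exists>M::int. \<forall>m::int. (even n \<longrightarrow> even m) \<longrightarrow> W (lam + of_int m) \<noteq> {0} \<longrightarrow> m \<le> M"
proof -
  obtain MA where MA0: "\<forall>m::int. even m \<longrightarrow> W (lam + of_int m) \<noteq> {0} \<longrightarrow> m \<le> MA"
    using boundA[OF LNE] by (elim exE)
  note MA = MA0[rule_format]
  show ?thesis
  proof (intro exI allI impI)
    fix m :: int assume par: "even n \<longrightarrow> even m" and ne: "W (lam + of_int m) \<noteq> {0}"
    show "m \<le> MA + int n"
    proof (cases "even m")
      case True then show ?thesis using MA[OF True ne] by simp
    next
      case False
      then have on: "odd n" using par by blast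
      obtain v where v: "v \<in> W (lam + of_int m)" "v \<noteq> 0" using ne W0 by blast
      obtain k where k: "k \<le> n" "P k v \<noteq> 0" using K0[OF v(2)] by blast
      have Pv: "P k v \<in> W (lam + of_int (m + int n - 2 * int k))"
        by (rule W_cong[OF P_W[OF k(1) v(1)]]) simp
      have ev: "even (m + int n - 2 * int k)" using False on by simp
      have "W (lam + of_int (m + int n - 2 * int k)) \<noteq> {0}" using Pv k(2) by auto
      then have "m + int n - 2 * int k \<le> MA" using MA ev by blast
      then show ?thesis using k(1) by linarith
    qed
  qed
qed

lemma highest_if_LNE:
  assumes LNE: "LN E = UNIV"
  shows "highest_mod n s E H F P"
proof -
  obtain M where M0: "\<forall>m::int. (even n \<longrightarrow> even m) \<longrightarrow> W (lam + of_int m) \<noteq> {0} \<longrightarrow> m \<le> M"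
    using boundAll[OF LNE] by (elim exE)
  note M = M0[rule_format]
  define S where "S = {m::int. (even n \<longrightarrow> even m) \<and> W (lam + of_int m) \<noteq> {0}}"
  have S0: "0 \<in> S" using lamne S_def by simp
  have SM: "m \<le> M" if "m \<in> S" for m using M that S_def by blast
  define S' where "S' = S \<inter> {0..M}"
  have finS': "finite S'" unfolding S'_def by simp
  have S'0: "0 \<in> S'" using S0 SM S'_def by auto
  define mx where "mx = Max S'"
  have mxS': "mx \<in> S'" unfolding mx_def using finS' S'0 Max_in by blast
  then have mxS: "mx \<in> S" unfolding S'_def by blast
  have mx0: "0 \<le> mx" unfolding mx_def using finS' S'0 Max_ge by blast
  have mxge: "m \<le> mx" if m: "m \<in> S" for m
  proof (cases "0 \<le> m")
    case True then have "m \<in> S'" using m SM S'_def by auto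
    then show ?thesis using finS' mx_def Max_ge by blast
  next
    case False then show ?thesis using mx0 by simp
  qed
  define \<nu> where "\<nu> = lam + of_int mx"
  have W\<nu>: "W \<nu> \<noteq> {0}" using mxS S_def \<nu>_def by simp
  have top: "E w = 0 \<and> (\<forall>k\<le>n. 2 * k < n \<longrightarrow> P k w = 0)" if w: "w \<in> W \<nu>" for w
  proof -
    have Ew: "E w \<in> W (lam + of_int (mx + 2))" by (rule W_cong[OF E_W[OF w]]) (simp add: \<nu>_def)
    have "E w = 0"
    proof (rule ccontr)
      assume "E w \<noteq> 0"
      then have "W (lam + of_int (mx + 2)) \<noteq> {0}" using Ew by auto
      moreover have "even n \<longrightarrow> even (mx + 2)" using mxS S_def by simp
      ultimately have "mx + 2 \<in> S" using S_def by simp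
      then show False using mxge[of "mx + 2"] by simp
    qed
    moreover have "P k w = 0" if k: "k \<le> n" "2 * k < n" for k
    proof (rule ccontr)
      assume nz: "P k w \<noteq> 0"
      have Pw: "P k w \<in> W (lam + of_int (mx + (int n - 2 * int k)))"
        by (rule W_cong[OF P_W[OF k(1) w]]) (simp add: \<nu>_def)
      then have "W (lam + of_int (mx + (int n - 2 * int k))) \<noteq> {0}" using nz by auto
      moreover have "even n \<longrightarrow> even (mx + (int n - 2 * int k))" using mxS S_def by auto
      ultimately have "mx + (int n - 2 * int k) \<in> S" using S_def by simp
      then have "mx + (int n - 2 * int k) \<le> mx" by (rule mxge)
      then show False using k(2) by linarith
    qed
    ultimately show ?thesis by blast
  qed
  show ?thesis
  proof (cases "even n")
    case False
    obtain w where w: "w \<in> W \<nu>" "w \<noteq> 0" using W\<nu> W0 by blast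
    have Hw: "H w = s \<nu> w" using w(1) W_iff by blast
    show ?thesis unfolding highest_mod_def
      using w(2) Hw top[OF w(1)] False gen_by[OF w(2)] by blast
  next
    case True
    define l where "l = n div 2"
    have nl: "n = 2 * l" using True l_def by simp
    have l: "l \<le> n" using l_def by simp
    have PlW: "P l x \<in> W \<mu>" if "x \<in> W \<mu>" for x \<mu>
      by (rule W_cong[OF P_W[OF l that]]) (simp add: nl)
    obtain u c where uc: "u \<noteq> 0" "P l u = s c u"
      using eigen_exists[OF linP[OF l] W_sub PlW lamfd lamne] by blast
    define T where "T = (\<lambda>v. P l v - s c v)"
    have "u \<in> LN T" unfolding LN_def T_def using uc by (intro CollectI exI[of _ 1]) simp
    then have "LN T \<noteq> {0}" using uc by auto
    then have LNT: "LN T = UNIV" using LN_P_univ[OF l, of c] nl T_def by simp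
    obtain w where w: "w \<in> W \<nu>" "w \<noteq> 0" using W\<nu> W0 by blast
    obtain N where "(T ^^ N) w = 0" using LNT unfolding LN_def by blast
    then obtain j where j: "(T ^^ j) w \<noteq> 0" "T ((T ^^ j) w) = 0" using last_nonzero w(2) by blast
    have TW: "T x \<in> W \<nu>" if "x \<in> W \<nu>" for x
      unfolding T_def using PlW[OF that] that W_sub subspace_diff subspace_scale by blast
    have TiW: "(T ^^ i) w \<in> W \<nu>" for i by (induction i) (simp_all add: w TW)
    define w' where "w' = (T ^^ j) w"
    have w': "w' \<in> W \<nu>" "w' \<noteq> 0" using TiW j w'_def by auto
    have Pw': "P (n div 2) w' = s c w'" using j(2) unfolding w'_def T_def l_def by simp
    have Hw': "H w' = s \<nu> w'" using w'(1) W_iff by blast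
    show ?thesis unfolding highest_mod_def
      using w'(2) Hw' top[OF w'(1)] Pw' gen_by[OF w'(2)] by blast
  qed
qed

lemma inj_E: "\<not> highest_mod n s E H F P \<Longrightarrow> inj E"
proof -
  assume nh: "\<not> highest_mod n s E H F P"
  show "inj E" unfolding lin_inj[OF linE]
  proof (intro allI impI, rule ccontr)
    fix x assume x: "E x = 0" "x \<noteq> 0"
    then have "x \<in> LN E" unfolding LN_def by (intro CollectI exI[of _ 1]) simp
    then have "LN E \<noteq> {0}" using x(2) by auto
    then have "LN E = UNIV" by (rule LN_E_univ)
    then show False using highest_if_LNE nh by blast
  qed
qed

end


context SGM begin

lemma twist_gmod: "gmod n s F (\<lambda>v. - H v) E (\<lambda>k. P (n - k))"
  unfolding gmod_def
proof (intro conjI allI impI)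
  show "vector_space s" by (rule vs)
  show "Vector_Spaces.linear s s F" using linF lin_def by blast
  show "Vector_Spaces.linear s s (\<lambda>v. - H v)" using lin_negop[OF linH] lin_def by blast
  show "Vector_Spaces.linear s s E" using linE lin_def by blast
  fix k assume k: "k \<le> n"
  have k': "n - k \<le> n" by simp
  show "Vector_Spaces.linear s s (P (n - k))" using linP[OF k'] lin_def by blast
next
  fix v
  show "- H (F v) - F (- H v) = s 2 (F v)" using HF[of v] by (simp add: lin_neg[OF linF] algebra_simps)
  show "- H (E v) - E (- H v) = s (- 2) (E v)" using HE[of v] by (simp add: lin_neg[OF linE] algebra_simps)
  show "F (E v) - E (F v) = - H v" using EF[of v] by (simp add: algebra_simps)
next
  fix k v assume k: "k \<le> n"
  have k': "n - k \<le> n" by simp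
  have "- H (P (n - k) v) - P (n - k) (- H v) = - (s (of_int (int n - 2 * int (n - k))) (P (n - k) v))"
    using HP[OF k', of v] by (simp add: lin_neg[OF linP[OF k']] algebra_simps)
  also have "\<dots> = s (of_int (int n - 2 * int k)) (P (n - k) v)"
  proof -
    have "int (n - k) = int n - int k" using k by simp
    then have eq: "(of_int (int n - 2 * int k) :: complex) = - of_int (int n - 2 * int (n - k))"
      by simp
    show ?thesis by (simp only: eq scale_minus_left)
  qed
  finally show "- H (P (n - k) v) - P (n - k) (- H v) = s (of_int (int n - 2 * int k)) (P (n - k) v)" .
next
  fix k v assume k: "k \<le> n"
  have k': "n - k \<le> n" by simp
  show "F (P (n - k) v) - P (n - k) (F v) = (if k = 0 then 0 else s (of_nat k) (P (n - (k - 1)) v))"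
  proof (cases "k = 0")
    case True then show ?thesis using FP[OF k', of v] by simp
  next
    case False
    then have "n - k \<noteq> n" "n - (n - k) = k" "n - k + 1 = n - (k - 1)" using k by auto
    then show ?thesis using FP[OF k', of v] False by simp
  qed
  show "E (P (n - k) v) - P (n - k) (E v) = (if k = n then 0 else s (of_nat (n - k)) (P (n - (k + 1)) v))"
  proof (cases "k = n")
    case True then show ?thesis using EP[OF k', of v] by simp
  next
    case False
    then have "n - k \<noteq> 0" "n - k - 1 = n - (k + 1)" using k by auto
    then show ?thesis using EP[OF k', of v] False by simp
  qed
next
  fix k k' v assume k: "k \<le> n" and k': "k' \<le> n"
  show "P (n - k) (P (n - k') v) = P (n - k') (P (n - k) v)" by (rule PP) auto
qed

lemma twist_wspace: "wspace s (\<lambda>v. - H v) \<mu> = W (- \<mu>)"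
  unfolding wspace_def by (auto simp: minus_equation_iff[of "H _"])

lemma twist_SGM: "SGM n s F (\<lambda>v. - H v) E (\<lambda>k. P (n - k)) (- lam)"
proof -
  interpret G2: GM n s F "\<lambda>v. - H v" E "\<lambda>k. P (n - k)" by standard (rule twist_gmod)
  show ?thesis
  proof (unfold_locales)
    show "simple_mod n s F (\<lambda>v. - H v) E (\<lambda>k. P (n - k))"
      unfolding simple_mod_def
    proof (rule conjI[OF simple[unfolded simple_mod_def, THEN conjunct1]], intro allI impI)
      fix U assume "submod n s F (\<lambda>v. - H v) E (\<lambda>k. P (n - k)) U"
      then have U: "subspace U" "F ` U \<subseteq> U" "(\<lambda>v. - H v) ` U \<subseteq> U" "E ` U \<subseteq> U"
        "\<And>k. k \<le> n \<Longrightarrow> P (n - k) ` U \<subseteq> U" unfolding submod_def by auto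
      show "U = {0} \<or> U = UNIV"
      proof (rule submod_triv[OF U(1)])
        fix v assume v: "v \<in> U"
        show "E v \<in> U" "F v \<in> U" using U v by auto
        have "- H v \<in> U" using U(3) v by auto
        then show "H v \<in> U" using subspace_neg[OF U(1)] by fastforce
      next
        fix k v assume k: "k \<le> n" and v: "v \<in> U"
        have "n - k \<le> n" by simp
        then have "P (n - (n - k)) ` U \<subseteq> U" by (rule U(5))
        then show "P k v \<in> U" using k v by auto
      qed
    qed
    show "weight_mod s (\<lambda>v. - H v)"
    proof -
      have "(\<Union>\<mu>. wspace s (\<lambda>v. - H v) \<mu>) = (\<Union>\<mu>. W \<mu>)"
        unfolding twist_wspace by (auto, metis minus_minus)
      then show ?thesis using wm unfolding weight_mod_def by simp
    qed
    show "\<forall>\<mu>\<in>supp s (\<lambda>v. - H v). \<mu> - - lam \<in> \<int>"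
    proof
      fix \<mu> assume "\<mu> \<in> supp s (\<lambda>v. - H v)"
      then have "- \<mu> \<in> supp s H" unfolding supp_def twist_wspace by simp
      then have "- \<mu> - lam \<in> \<int>" using suppZ by blast
      then have "- (- \<mu> - lam) \<in> \<int>" by (rule Ints_minus)
      then show "\<mu> - - lam \<in> \<int>" by (simp add: add.commute)
    qed
    show "wspace s (\<lambda>v. - H v) (- lam) \<noteq> {0}" using lamne twist_wspace by simp
    show "fin_dim s (wspace s (\<lambda>v. - H v) (- lam))" using lamfd twist_wspace by simp
    show "\<exists>k\<le>n. \<exists>v. P (n - k) v \<noteq> 0"
    proof -
      obtain k v where "k \<le> n" "P k v \<noteq> 0" using HV by blast
      then show ?thesis by (intro exI[of _ "n - k"]) auto
    qed
  qed
qed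

lemma lowest_from_twist:
  assumes "highest_mod n s F (\<lambda>v. - H v) E (\<lambda>k. P (n - k))"
  shows "lowest_mod n s E H F P"
proof -
  obtain v \<mu> where v: "v \<noteq> 0" "- H v = s \<mu> v" "F v = 0"
    "\<forall>k\<le>n. 2 * k < n \<longrightarrow> P (n - k) v = 0"
    "even n \<longrightarrow> (\<exists>c. P (n - n div 2) v = s c v)"
    using assms unfolding highest_mod_def by blast
  have Hv: "H v = s (- \<mu>) v"
  proof -
    have "H v = - (- H v)" by simp
    also have "\<dots> = - s \<mu> v" using v(2) by simp
    finally show ?thesis by simp
  qed
  have Pk: "\<forall>k\<le>n. n < 2 * k \<longrightarrow> P k v = 0"
  proof (intro allI impI)
    fix k assume k: "k \<le> n" "n < 2 * k"
    have "n - k \<le> n" "2 * (n - k) < n" using k by auto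
    then have "P (n - (n - k)) v = 0" using v(4) by blast
    then show "P k v = 0" using k by simp
  qed
  have "n - n div 2 = n div 2" if "even n" using that by auto
  then have Pl: "even n \<longrightarrow> (\<exists>c. P (n div 2) v = s c v)" using v(5) by auto
  show ?thesis unfolding lowest_mod_def using v(1) Hv v(3) Pk Pl gen_by[OF v(1)] by blast
qed

lemma inj_F: "\<not> lowest_mod n s E H F P \<Longrightarrow> inj F"
proof -
  assume nl: "\<not> lowest_mod n s E H F P"
  interpret S2: SGM n s F "\<lambda>v. - H v" E "\<lambda>k. P (n - k)" "- lam" by (rule twist_SGM)
  show "inj F" using S2.inj_E lowest_from_twist nl by blast
qed

end


context GM begin

lemma fd_basis:
  assumes "fin_dim s X"
  obtains B where "finite B" "B \<subseteq> X" "independent B" "X \<subseteq> span B" "card B = dim X"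
proof -
  obtain B where B: "B \<subseteq> X" "independent B" "X \<subseteq> span B" "card B = dim X" by (rule basis_exists)
  obtain C where C: "finite C" "X \<subseteq> span C" using assms unfolding fin_dim_def by blast
  have "finite B" using independent_span_bound[OF C(1) B(2)] B(1) C(2) by blast
  then show ?thesis using B that by blast
qed

lemma fd_inj:
  assumes T: "lin T" "inj T" and XY: "\<And>x. x \<in> X \<Longrightarrow> T x \<in> Y" and fY: "fin_dim s Y"
  shows "fin_dim s X"
proof -
  obtain B where B: "B \<subseteq> X" "independent B" "X \<subseteq> span B" "card B = dim X" by (rule basis_exists)
  have mh: "module_hom s s T" using lin_mh[OF T(1)] .
  have iT: "independent (T ` B)"
    using module_hom.independent_injective_image[OF mh B(2)] T(2) inj_on_subset by blast
  obtain C where C: "finite C" "Y \<subseteq> span C" using fY unfolding fin_dim_def by blast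
  have "T ` B \<subseteq> span C" using B(1) XY C(2) by blast
  then have "finite (T ` B)" using independent_span_bound[OF C(1) iT] by blast
  then have "finite B" using T(2) finite_imageD inj_on_subset by blast
  then show ?thesis unfolding fin_dim_def using B(3) by blast
qed

lemma indep_le_dim:
  assumes fY: "fin_dim s Y" and S: "independent S" "S \<subseteq> Y"
  shows "finite S \<and> card S \<le> dim Y"
proof -
  obtain BY where BY: "finite BY" "BY \<subseteq> Y" "independent BY" "Y \<subseteq> span BY" "card BY = dim Y"
    using fY by (rule fd_basis)
  have "S \<subseteq> span BY" using S(2) BY(4) by blast
  then show ?thesis using independent_span_bound[OF BY(1) S(1)] BY(5) by simp
qed

lemma dim_inj_le:
  assumes T: "lin T" "inj T" and XY: "\<And>x. x \<in> X \<Longrightarrow> T x \<in> Y" and fY: "fin_dim s Y"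
  shows "dim X \<le> dim Y"
proof -
  obtain B where B: "B \<subseteq> X" "independent B" "X \<subseteq> span B" "card B = dim X" by (rule basis_exists)
  have mh: "module_hom s s T" using lin_mh[OF T(1)] .
  have iT: "independent (T ` B)"
    using module_hom.independent_injective_image[OF mh B(2)] T(2) inj_on_subset by blast
  have "T ` B \<subseteq> Y" using B(1) XY by blast
  then have "card (T ` B) \<le> dim Y" using indep_le_dim[OF fY iT] by blast
  moreover have "card (T ` B) = card B" using T(2) card_image inj_on_subset by blast
  ultimately show ?thesis using B(4) by simp
qed

lemma span_full:
  assumes fY: "fin_dim s Y" and S: "independent S" "S \<subseteq> Y" and c: "card S = dim Y"
  shows "Y \<subseteq> span S"
proof
  fix y assume y: "y \<in> Y"
  show "y \<in> span S"
  proof (rule ccontr)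
    assume ny: "y \<notin> span S"
    have fS: "finite S" using indep_le_dim[OF fY S] by blast
    have yS: "y \<notin> S" using ny span_base by blast
    have "independent (insert y S)" using S(1) ny by (simp add: independent_insert)
    moreover have "insert y S \<subseteq> Y" using S(2) y by blast
    ultimately have "card (insert y S) \<le> dim Y" using indep_le_dim[OF fY] by blast
    then show False using fS yS c by simp
  qed
qed

lemma surj_fd:
  assumes X: "subspace X" and T: "lin T" "inj T" and TXY: "\<And>x. x \<in> X \<Longrightarrow> T x \<in> Y"
    and U: "lin U" "inj U" and UYX: "\<And>y. y \<in> Y \<Longrightarrow> U y \<in> X"
    and fX: "fin_dim s X" and fY: "fin_dim s Y"
  shows "T ` X = Y"
proof
  show "T ` X \<subseteq> Y" using TXY by blast
  have d1: "dim X \<le> dim Y" by (rule dim_inj_le[OF T TXY fY])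
  have d2: "dim Y \<le> dim X" by (rule dim_inj_le[OF U UYX fX])
  obtain B where B: "B \<subseteq> X" "independent B" "X \<subseteq> span B" "card B = dim X" by (rule basis_exists)
  have mh: "module_hom s s T" using lin_mh[OF T(1)] .
  have iT: "independent (T ` B)"
    using module_hom.independent_injective_image[OF mh B(2)] T(2) inj_on_subset by blast
  have TBY: "T ` B \<subseteq> Y" using B(1) TXY by blast
  have "card (T ` B) = card B" using T(2) card_image inj_on_subset by blast
  then have "card (T ` B) = dim Y" using B(4) d1 d2 by simp
  then have "Y \<subseteq> span (T ` B)" by (rule span_full[OF fY iT TBY])
  also have "span (T ` B) = T ` span B" by (rule module_hom.span_image[OF mh])
  also have "span B \<subseteq> X" by (rule span_minimal[OF B(1) X])
  finally show "Y \<subseteq> T ` X" by blast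
qed

lemma dim_iso:
  assumes T: "lin T" "inj T" and TXY: "T ` X = Y"
  shows "dim Y = dim X"
proof -
  obtain B where B: "B \<subseteq> X" "independent B" "X \<subseteq> span B" "card B = dim X" by (rule basis_exists)
  have mh: "module_hom s s T" using lin_mh[OF T(1)] .
  have iT: "independent (T ` B)"
    using module_hom.independent_injective_image[OF mh B(2)] T(2) inj_on_subset by blast
  have TBY: "T ` B \<subseteq> Y" using B(1) TXY by blast
  have "Y \<subseteq> T ` span B" using TXY B(3) by blast
  also have "T ` span B = span (T ` B)" by (rule module_hom.span_image[OF mh, symmetric])
  finally have Ysp: "Y \<subseteq> span (T ` B)" .
  have "span (T ` B) = span Y"
  proof
    show "span (T ` B) \<subseteq> span Y" using TBY span_mono by blast
    show "span Y \<subseteq> span (T ` B)" using Ysp span_minimal subspace_span by blast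
  qed
  then have "dim Y = card (T ` B)" using dim_eq_card[OF _ iT] by simp
  also have "card (T ` B) = card B" using T(2) card_image inj_on_subset by blast
  finally show ?thesis using B(4) by simp
qed

lemma eig_indep:
  "finite M \<Longrightarrow> (\<forall>\<mu>\<in>M. g \<mu> \<in> W \<mu>) \<Longrightarrow> sum g M = 0 \<Longrightarrow> \<forall>\<mu>\<in>M. g \<mu> = 0"
proof (induction M arbitrary: g rule: finite_induct)
  case empty then show ?case by simp
next
  case (insert x M)
  define T where "T = (\<lambda>v. H v - s x v)"
  have linT: "lin T" unfolding T_def by (rule lin_shift[OF linH])
  define h where "h \<mu> = s (\<mu> - x) (g \<mu>)" for \<mu>
  have Tg: "T (g \<mu>) = h \<mu>" if "\<mu> \<in> insert x M" for \<mu>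
  proof -
    have gw: "H (g \<mu>) = s \<mu> (g \<mu>)" using insert.prems(1) that W_iff by blast
    show ?thesis by (simp add: T_def h_def gw scale_left_diff_distrib)
  qed
  have "T (sum g (insert x M)) = 0" using insert.prems(2) lin_zero[OF linT] by simp
  then have "sum (\<lambda>\<mu>. T (g \<mu>)) (insert x M) = 0" by (simp only: lin_sum[OF linT])
  then have "h x + sum h M = 0" using Tg insert.hyps by simp
  moreover have "h x = 0" by (simp add: h_def)
  ultimately have hM: "sum h M = 0" by simp
  have hW: "\<forall>\<mu>\<in>M. h \<mu> \<in> W \<mu>" using insert.prems(1) W_sub subspace_scale h_def by auto
  have "\<forall>\<mu>\<in>M. h \<mu> = 0" by (rule insert.IH[OF hW hM])
  then have gM: "\<forall>\<mu>\<in>M. g \<mu> = 0" using insert.hyps(2) by (auto simp: h_def)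
  then have "sum g M = 0" by simp
  then have "g x = 0" using insert.prems(2) insert.hyps by simp
  then show ?case using gM by simp
qed

lemma span_decomp:
  assumes "x \<in> span (\<Union>\<mu>\<in>A. W \<mu>)"
  shows "\<exists>M g. finite M \<and> M \<subseteq> A \<and> (\<forall>\<mu>\<in>M. g \<mu> \<in> W \<mu>) \<and> x = sum g M"
proof -
  define D where "D = {x. \<exists>M g. finite M \<and> M \<subseteq> A \<and> (\<forall>\<mu>\<in>M. g \<mu> \<in> W \<mu>) \<and> x = sum g M}"
  have gen: "(\<Union>\<mu>\<in>A. W \<mu>) \<subseteq> D"
  proof
    fix y assume "y \<in> (\<Union>\<mu>\<in>A. W \<mu>)"
    then obtain \<mu> where "\<mu> \<in> A" "y \<in> W \<mu>" by blast
    then show "y \<in> D" unfolding D_def by (intro CollectI exI[of _ "{\<mu>}"] exI[of _ "\<lambda>_. y"]) simp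
  qed
  have sub: "subspace D" unfolding subspace_def
  proof (intro conjI ballI allI)
    show "0 \<in> D" unfolding D_def by (intro CollectI exI[of _ "{}"]) simp
  next
    fix y z assume "y \<in> D" "z \<in> D"
    then obtain M1 g1 M2 g2 where 1: "finite M1" "M1 \<subseteq> A" "\<forall>\<mu>\<in>M1. g1 \<mu> \<in> W \<mu>" "y = sum g1 M1"
      and 2: "finite M2" "M2 \<subseteq> A" "\<forall>\<mu>\<in>M2. g2 \<mu> \<in> W \<mu>" "z = sum g2 M2" unfolding D_def by blast
    define g where "g \<mu> = (if \<mu> \<in> M1 then g1 \<mu> else 0) + (if \<mu> \<in> M2 then g2 \<mu> else 0)" for \<mu>
    have s1: "sum (\<lambda>\<mu>. if \<mu> \<in> M1 then g1 \<mu> else 0) (M1 \<union> M2) = sum g1 M1"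
      by (rule sum.mono_neutral_cong_right) (use 1 2 in auto)
    have s2: "sum (\<lambda>\<mu>. if \<mu> \<in> M2 then g2 \<mu> else 0) (M1 \<union> M2) = sum g2 M2"
      by (rule sum.mono_neutral_cong_right) (use 1 2 in auto)
    have "sum g (M1 \<union> M2) = y + z" unfolding g_def sum.distrib s1 s2 using 1 2 by simp
    moreover have "\<forall>\<mu>\<in>M1 \<union> M2. g \<mu> \<in> W \<mu>"
      using 1 2 W_sub W0 subspace_add unfolding g_def by auto
    ultimately show "y + z \<in> D" unfolding D_def using 1 2
      by (intro CollectI exI[of _ "M1 \<union> M2"] exI[of _ g]) auto
  next
    fix c y assume "y \<in> D"
    then obtain M g where 1: "finite M" "M \<subseteq> A" "\<forall>\<mu>\<in>M. g \<mu> \<in> W \<mu>" "y = sum g M" unfolding D_def by blast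
    have "s c y = sum (\<lambda>\<mu>. s c (g \<mu>)) M" using 1(4) by (simp add: scale_sum_right)
    moreover have "\<forall>\<mu>\<in>M. s c (g \<mu>) \<in> W \<mu>" using 1(3) W_sub subspace_scale by blast
    ultimately show "s c y \<in> D" unfolding D_def using 1
      by (intro CollectI exI[of _ M] exI[of _ "\<lambda>\<mu>. s c (g \<mu>)"]) auto
  qed
  have "span (\<Union>\<mu>\<in>A. W \<mu>) \<subseteq> D" by (rule span_minimal[OF gen sub])
  then show ?thesis using assms D_def by blast
qed

lemma not_in_other:
  assumes w: "w \<in> W \<nu>" and sp: "w \<in> span (\<Union>\<mu>\<in>A. W \<mu>)" and nA: "\<nu> \<notin> A"
  shows "w = 0"
proof -
  obtain M g where M: "finite M" "M \<subseteq> A" "\<forall>\<mu>\<in>M. g \<mu> \<in> W \<mu>" "w = sum g M"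
    using span_decomp[OF sp] by blast
  have nM: "\<nu> \<notin> M" using M(2) nA by blast
  define g' where "g' = g(\<nu> := - w)"
  have "sum g' M = sum g M" unfolding g'_def using nM by (intro sum.cong) auto
  then have "sum g' (insert \<nu> M) = 0" using M(1,4) nM by (simp add: g'_def)
  moreover have "\<forall>\<mu>\<in>insert \<nu> M. g' \<mu> \<in> W \<mu>"
    using M(3) w W_sub subspace_neg nM unfolding g'_def by auto
  ultimately have "\<forall>\<mu>\<in>insert \<nu> M. g' \<mu> = 0" using eig_indep M(1) by blast
  then show ?thesis unfolding g'_def by simp
qed

end


context GM begin

lemma span_stable:
  assumes T: "lin T" and gen: "\<And>x. x \<in> S \<Longrightarrow> T x \<in> span S" and x: "x \<in> span S"
  shows "T x \<in> span S"
proof -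
  have mh: "module_hom s s T" using lin_mh[OF T] .
  have "T ` span S = span (T ` S)" by (rule module_hom.span_image[OF mh, symmetric])
  also have "\<dots> \<subseteq> span S" using gen span_minimal subspace_span by (metis image_subsetI)
  finally show ?thesis using x by blast
qed

lemma span_stable_W:
  assumes T: "lin T" and gen: "\<And>x \<mu>. \<mu> \<in> A \<Longrightarrow> x \<in> W \<mu> \<Longrightarrow> \<exists>\<mu>'\<in>A. T x \<in> W \<mu>'"
    and x: "x \<in> span (\<Union>\<mu>\<in>A. W \<mu>)"
  shows "T x \<in> span (\<Union>\<mu>\<in>A. W \<mu>)"
proof (rule span_stable[OF T _ x])
  fix y assume "y \<in> (\<Union>\<mu>\<in>A. W \<mu>)"
  then obtain \<mu> where "\<mu> \<in> A" "y \<in> W \<mu>" by blast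
  then obtain \<mu>' where "\<mu>' \<in> A" "T y \<in> W \<mu>'" using gen by blast
  then show "T y \<in> span (\<Union>\<mu>\<in>A. W \<mu>)" by (intro span_base) blast
qed

lemma unif_nil:
  assumes "finite B" "lin T" "\<forall>b\<in>B. \<exists>N. (T ^^ N) b = 0"
  shows "\<exists>N. \<forall>b\<in>B. (T ^^ N) b = 0"
  using assms
proof (induction B rule: finite_induct)
  case empty then show ?case by simp
next
  case (insert x B)
  obtain N1 where N1: "(T ^^ N1) x = 0" using insert.prems by blast
  obtain N2 where N2: "\<forall>b\<in>B. (T ^^ N2) b = 0" using insert by blast
  have "(T ^^ (N1 + N2)) x = 0" using funpow_more'[OF insert.prems(1) N1] by simp
  moreover have "\<forall>b\<in>B. (T ^^ (N1 + N2)) b = 0"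
  proof
    fix b assume "b \<in> B"
    then have "(T ^^ N2) b = 0" using N2 by blast
    then show "(T ^^ (N1 + N2)) b = 0" by (rule funpow_more'[OF insert.prems(1)]) simp
  qed
  ultimately show ?case by blast
qed

definition Yf :: "nat \<Rightarrow> 'v \<Rightarrow> 'v" where
  "Yf j v = - (if j = n then 0 else s (of_nat (n - j)) (P (j + 1) v))"
end

context GM begin
lemma Yf0: "j \<le> n \<Longrightarrow> Yf j 0 = 0"
  by (cases "j = n") (simp_all add: Yf_def lin_zero[OF linP])

lemma Yf_comm: "j \<le> n \<Longrightarrow> i \<le> n \<Longrightarrow> P i (Yf j v) = Yf j (P i v)"
proof (cases "j = n")
  case True then show "i \<le> n \<Longrightarrow> ?thesis" by (simp add: Yf_def lin_zero[OF linP])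
next
  case False
  assume j: "j \<le> n" and i: "i \<le> n"
  then have j1: "j + 1 \<le> n" using False by simp
  have pp: "P i (P (j + 1) v) = P (j + 1) (P i v)" by (rule PP[OF i j1])
  show ?thesis using False pp by (simp add: Yf_def lin_neg[OF linP[OF i]] lin_scale[OF linP[OF i]])
qed

lemma Ppow_comm: "j \<le> n \<Longrightarrow> i \<le> n \<Longrightarrow> (P i ^^ r) (P j v) = P j ((P i ^^ r) v)"
  by (induction r) (simp_all add: PP)

lemma Ppow_Yf: "j \<le> n \<Longrightarrow> i \<le> n \<Longrightarrow> (P i ^^ r) (Yf j v) = Yf j ((P i ^^ r) v)"
  by (induction r) (simp_all add: Yf_comm)

lemma comm_F:
  assumes j: "j \<le> n"
  shows "(P j ^^ Suc r) (F w) = F ((P j ^^ Suc r) w) + s (of_nat (Suc r)) (Yf j ((P j ^^ r) w))"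
proof (rule pow_comm_XY[where T = "P j" and X = F and Y = "Yf j", OF linP[OF j]])
  fix v
  show "P j (F v) = F (P j v) + Yf j v" using FP[OF j, of v] by (simp add: Yf_def algebra_simps)
  show "P j (Yf j v) = Yf j (P j v)" by (rule Yf_comm[OF j j])
qed

end

context SGM begin

lemma WZ: "\<not> (\<mu> - lam \<in> \<int>) \<Longrightarrow> W \<mu> = {0}"
  using suppZ unfolding supp_def by auto

lemma noB:
  assumes en: "even n" and om: "odd m"
  shows "W (lam + of_int m) = {0}"
proof (rule ccontr)
  assume "W (lam + of_int m) \<noteq> {0}"
  then obtain v where v: "v \<in> W (lam + of_int m)" "v \<noteq> 0" using W0 by blast
  define A where "A = {lam + of_int m' | m'. odd m'}"
  define U where "U = span (\<Union>\<mu>\<in>A. W \<mu>)"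
  have "U = UNIV"
  proof (rule submod_univ)
    show "subspace U" unfolding U_def by simp
    show "v \<in> U" unfolding U_def A_def using v(1) om by (intro span_base) blast
    show "v \<noteq> 0" by (rule v(2))
  next
    fix x assume "x \<in> U"
    then show "E x \<in> U" unfolding U_def
    proof (rule span_stable_W[OF linE, rotated])
      fix x \<mu> assume "\<mu> \<in> A" "x \<in> W \<mu>"
      then obtain m' where m': "odd m'" "\<mu> = lam + of_int m'" unfolding A_def by blast
      have "E x \<in> W (lam + of_int (m' + 2))" by (rule W_cong[OF E_W[OF \<open>x \<in> W \<mu>\<close>]]) (simp add: m')
      moreover have "lam + of_int (m' + 2) \<in> A" unfolding A_def using m' by (auto intro!: exI[of _ "m' + 2"])
      ultimately show "\<exists>\<mu>'\<in>A. E x \<in> W \<mu>'" by blast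
    qed
  next
    fix x assume "x \<in> U"
    then show "F x \<in> U" unfolding U_def
    proof (rule span_stable_W[OF linF, rotated])
      fix x \<mu> assume "\<mu> \<in> A" "x \<in> W \<mu>"
      then obtain m' where m': "odd m'" "\<mu> = lam + of_int m'" unfolding A_def by blast
      have "F x \<in> W (lam + of_int (m' - 2))" by (rule W_cong[OF F_W[OF \<open>x \<in> W \<mu>\<close>]]) (simp add: m')
      moreover have "lam + of_int (m' - 2) \<in> A" unfolding A_def using m' by (auto intro!: exI[of _ "m' - 2"])
      ultimately show "\<exists>\<mu>'\<in>A. F x \<in> W \<mu>'" by blast
    qed
  next
    fix x assume "x \<in> U"
    then show "H x \<in> U" unfolding U_def
    proof (rule span_stable_W[OF linH, rotated])
      fix x \<mu> assume "\<mu> \<in> A" "x \<in> W \<mu>"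
      then show "\<exists>\<mu>'\<in>A. H x \<in> W \<mu>'" using H_W by blast
    qed
  next
    fix k x assume k: "k \<le> n" and "x \<in> U"
    then show "P k x \<in> U" unfolding U_def
    proof (intro span_stable_W[OF linP[OF k]])
      fix x \<mu> assume "\<mu> \<in> A" "x \<in> W \<mu>"
      then obtain m' where m': "odd m'" "\<mu> = lam + of_int m'" unfolding A_def by blast
      have "P k x \<in> W (lam + of_int (m' + (int n - 2 * int k)))"
        by (rule W_cong[OF P_W[OF k \<open>x \<in> W \<mu>\<close>]]) (simp add: m')
      moreover have "odd (m' + (int n - 2 * int k))" using m'(1) en by simp
      then have "lam + of_int (m' + (int n - 2 * int k)) \<in> A" unfolding A_def by blast
      ultimately show "\<exists>\<mu>'\<in>A. P k x \<in> W \<mu>'" by blast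
    qed
  qed
  obtain w where w: "w \<in> W lam" "w \<noteq> 0" using lamne W0 by blast
  have "lam \<notin> A"
  proof
    assume "lam \<in> A"
    then obtain m' where "odd m'" "lam = lam + of_int m'" unfolding A_def by blast
    then show False by simp
  qed
  then have "w = 0" using not_in_other[OF w(1)] \<open>U = UNIV\<close> U_def by blast
  then show False using w(2) by simp
qed

lemma fd_zero: "fin_dim s {0}"
  unfolding fin_dim_def by (intro exI[of _ "{}"]) simp

lemma classA_fd:
  assumes iE: "inj E" and iF: "inj F"
  shows "fin_dim s (W (lam + 2 * of_int i))"
proof -
  have up: "fin_dim s (W (lam + 2 * of_nat k))" for k
  proof (induction k)
    case 0 then show ?case using lamfd by simp
  next
    case (Suc k)
    show ?case
    proof (rule fd_inj[OF linF iF _ Suc.IH])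
      fix x assume "x \<in> W (lam + 2 * of_nat (Suc k))"
      then show "F x \<in> W (lam + 2 * of_nat k)" by (rule W_cong[OF F_W]) simp
    qed
  qed
  have down: "fin_dim s (W (lam - 2 * of_nat k))" for k
  proof (induction k)
    case 0 then show ?case using lamfd by simp
  next
    case (Suc k)
    show ?case
    proof (rule fd_inj[OF linE iE _ Suc.IH])
      fix x assume "x \<in> W (lam - 2 * of_nat (Suc k))"
      then show "E x \<in> W (lam - 2 * of_nat k)" by (rule W_cong[OF E_W]) simp
    qed
  qed
  show ?thesis
  proof (cases "0 \<le> i")
    case True
    then have "i = int (nat i)" by simp
    then obtain k where "i = int k" by blast
    then show ?thesis using up[of k] by simp
  next
    case False
    then have "i = - int (nat (- i))" by simp
    then obtain k where "i = - int k" by blast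
    then show ?thesis using down[of k] by simp
  qed
qed

lemma classA_surj:
  assumes iE: "inj E" and iF: "inj F"
  shows "E ` W (lam + 2 * of_int i) = W (lam + 2 * of_int (i + 1))"
proof (rule surj_fd[OF W_sub linE iE _ linF iF _ classA_fd[OF iE iF] classA_fd[OF iE iF]])
  fix x assume "x \<in> W (lam + 2 * of_int i)"
  then show "E x \<in> W (lam + 2 * of_int (i + 1))" by (rule W_cong[OF E_W]) simp
next
  fix x assume "x \<in> W (lam + 2 * of_int (i + 1))"
  then show "F x \<in> W (lam + 2 * of_int i)" by (rule W_cong[OF F_W]) simp
qed

end


context SGM begin

lemma ritt_step0:
  assumes k: "k < n" and C: "\<forall>v. (P k ^^ Suc p) v = 0"
  shows "\<forall>v. (P k ^^ p) (P (Suc k) v) = 0"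
proof
  fix v
  have kn: "k \<le> n" using k by simp
  have k1: "Suc k \<le> n" using k by simp
  have "(P k ^^ Suc p) (F v) = F ((P k ^^ Suc p) v) + s (of_nat (Suc p)) (Yf k ((P k ^^ p) v))"
    by (rule comm_F[OF kn])
  then have "s (of_nat (Suc p)) (Yf k ((P k ^^ p) v)) = 0" using C lin_zero[OF linF] by (simp del: funpow.simps)
  then have "Yf k ((P k ^^ p) v) = 0" by (simp del: of_nat_Suc)
  then have "s (of_nat (n - k)) (P (k + 1) ((P k ^^ p) v)) = 0" using k by (simp add: Yf_def)
  then have "P (k + 1) ((P k ^^ p) v) = 0" using k by simp
  then show "(P k ^^ p) (P (Suc k) v) = 0" using Ppow_comm[OF k1 kn] by simp
qed

lemma ritt_step:
  assumes k: "k < n" and C: "\<forall>v. (P k ^^ Suc p) ((P (Suc k) ^^ Suc q) v) = 0"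
  shows "\<forall>v. (P k ^^ p) ((P (Suc k) ^^ Suc (Suc (Suc q))) v) = 0"
proof
  fix v
  have kn: "k \<le> n" using k by simp
  have k1: "Suc k \<le> n" using k by simp
  define Z where "Z = (P (Suc k) ^^ Suc q) (P (Suc k) v)"
  have Zq: "Z = (P (Suc k) ^^ Suc (Suc q)) v" unfolding Z_def by (simp only: funpow_Suc_right comp_def)
  have Z0: "(P k ^^ Suc p) Z = 0" using C Z_def by blast
  have lA: "lin (P k ^^ Suc p)" by (rule lin_pow[OF linP[OF kn]])
  have e1: "(P (Suc k) ^^ Suc q) (F (P (Suc k) v)) = F Z + s (of_nat (Suc q)) (Yf (Suc k) ((P (Suc k) ^^ q) (P (Suc k) v)))"
    unfolding Z_def by (rule comm_F[OF k1])
  have l0: "(P k ^^ Suc p) ((P (Suc k) ^^ Suc q) (F (P (Suc k) v))) = 0" using C by blast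
  have Y0: "(P k ^^ Suc p) (Yf (Suc k) ((P (Suc k) ^^ q) (P (Suc k) v))) = 0"
  proof -
    have "(P (Suc k) ^^ q) (P (Suc k) v) = (P (Suc k) ^^ Suc q) v" by (simp only: funpow_Suc_right comp_def)
    then have "(P k ^^ Suc p) ((P (Suc k) ^^ q) (P (Suc k) v)) = 0" using C by simp
    then show ?thesis using Ppow_Yf[OF k1 kn] Yf0[OF k1] by (simp del: funpow.simps)
  qed
  have "(P k ^^ Suc p) (F Z) + s (of_nat (Suc q)) ((P k ^^ Suc p) (Yf (Suc k) ((P (Suc k) ^^ q) (P (Suc k) v)))) = 0"
    using l0 e1 lin_add[OF lA] lin_scale[OF lA] by simp
  then have FZ: "(P k ^^ Suc p) (F Z) = 0" using Y0 by simp
  have "(P k ^^ Suc p) (F Z) = F ((P k ^^ Suc p) Z) + s (of_nat (Suc p)) (Yf k ((P k ^^ p) Z))"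
    by (rule comm_F[OF kn])
  then have "s (of_nat (Suc p)) (Yf k ((P k ^^ p) Z)) = 0" using FZ Z0 lin_zero[OF linF] by (simp del: funpow.simps)
  then have "Yf k ((P k ^^ p) Z) = 0" by (simp del: of_nat_Suc)
  then have "s (of_nat (n - k)) (P (k + 1) ((P k ^^ p) Z)) = 0" using k by (simp add: Yf_def)
  then have "P (Suc k) ((P k ^^ p) Z) = 0" using k by simp
  then have "(P k ^^ p) (P (Suc k) Z) = 0" using Ppow_comm[OF k1 kn] by simp
  moreover have "P (Suc k) Z = (P (Suc k) ^^ Suc (Suc (Suc q))) v" unfolding Zq by simp
  ultimately show "(P k ^^ p) ((P (Suc k) ^^ Suc (Suc (Suc q))) v) = 0" by simp
qed

lemma ritt:
  assumes k: "k < n" and C: "\<forall>v. (P k ^^ Suc m) v = 0"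
  shows "\<forall>v. (P (Suc k) ^^ (2 * m + 1)) v = 0"
proof -
  have "i \<le> m \<Longrightarrow> \<forall>v. (P k ^^ (m - i)) ((P (Suc k) ^^ (2 * i + 1)) v) = 0" for i
  proof (induction i)
    case 0 then show ?case using ritt_step0[OF k C] by simp
  next
    case (Suc i)
    then have IH: "\<forall>v. (P k ^^ (m - i)) ((P (Suc k) ^^ (2 * i + 1)) v) = 0" by simp
    have e1: "m - i = Suc (m - Suc i)" using Suc.prems by simp
    have e2: "2 * i + 1 = Suc (2 * i)" by simp
    have e3: "2 * Suc i + 1 = Suc (Suc (Suc (2 * i)))" by simp
    show ?case unfolding e3 by (rule ritt_step[OF k IH[unfolded e1 e2]])
  qed
  from this[of m] show ?thesis by simp
qed

lemma P0_inj:
  assumes on: "odd n" and iE: "inj E" and iF: "inj F"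
  shows "inj (P 0)"
proof -
  have n0: "0 \<le> n" by simp
  show ?thesis unfolding lin_inj[OF linP[OF n0]]
  proof (intro allI impI, rule ccontr)
    fix x assume x: "P 0 x = 0" "x \<noteq> 0"
    have T0: "(\<lambda>v. P 0 v - s 0 v) = P 0" by (rule ext) simp
    have "x \<in> LN (P 0)" unfolding LN_def using x(1) by (intro CollectI exI[of _ 1]) simp
    then have "LN (P 0) \<noteq> {0}" using x(2) by auto
    then have LN0: "LN (P 0) = UNIV" using LN_P_univ[OF n0, of 0] T0 by simp
    obtain B where B: "finite B" "B \<subseteq> W lam" "independent B" "W lam \<subseteq> span B" "card B = dim (W lam)"
      using lamfd by (rule fd_basis)
    have "\<forall>b\<in>B. \<exists>N. (P 0 ^^ N) b = 0" using LN0 unfolding LN_def by blast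
    then obtain N0 where N0: "\<forall>b\<in>B. (P 0 ^^ N0) b = 0" using unif_nil[OF B(1) linP[OF n0]] by blast
    have mh: "module_hom s s (P 0 ^^ N0)" using lin_mh[OF lin_pow[OF linP[OF n0]]] .
    have Wl: "(P 0 ^^ N0) v = 0" if "v \<in> W lam" for v
      using module_hom.eq_0_on_span[OF mh, of B v] N0 B(4) that by blast
    have EP0: "(P 0 ^^ N) (E u) = E ((P 0 ^^ N) u)" for N u by (induction N) (simp_all add: EP[OF n0])
    have EPk: "(P 0 ^^ N0) ((E ^^ k) u) = (E ^^ k) ((P 0 ^^ N0) u)" for k u
      by (induction k) (simp_all add: EP0)
    have up: "(P 0 ^^ N0) v = 0" if "v \<in> W (lam + 2 * of_int (int k))" for k v
      using that
    proof (induction k arbitrary: v)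
      case 0 then show ?case using Wl by simp
    next
      case (Suc k)
      have hs: "E ` W (lam + 2 * of_int (int k)) = W (lam + 2 * of_int (int k + 1))" by (rule classA_surj[OF iE iF])
      have eqa: "lam + 2 * of_int (int (Suc k)) = lam + 2 * of_int (int k + 1)" by (simp add: algebra_simps)
      have "v \<in> W (lam + 2 * of_int (int k + 1))" using Suc.prems unfolding eqa .
      then have "v \<in> E ` W (lam + 2 * of_int (int k))" unfolding hs[symmetric] .
      then obtain u where u: "u \<in> W (lam + 2 * of_int (int k))" "v = E u" by blast
      then show ?case using Suc.IH[OF u(1)] EP0 lin_zero[OF linE] by simp
    qed
    have down: "(P 0 ^^ N0) v = 0" if "v \<in> W (lam - 2 * of_nat k)" for k v
    proof -
      have "(E ^^ k) v \<in> W lam" by (rule W_cong[OF E_pow_W[OF that]]) simp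
      then have "(P 0 ^^ N0) ((E ^^ k) v) = 0" by (rule Wl)
      then have "(E ^^ k) ((P 0 ^^ N0) v) = (E ^^ k) 0" using EPk funpow_lin_zero[OF linE] by simp
      moreover have "inj (E ^^ k)" using iE by simp
      ultimately show ?thesis by (meson injD)
    qed
    have evenA: "(P 0 ^^ N0) v = 0" if v: "v \<in> W (lam + of_int m)" and em: "even m" for m v
    proof -
      obtain i where mi: "m = 2 * i" using em by (rule evenE)
      show ?thesis
      proof (cases "0 \<le> i")
        case True
        then have "v \<in> W (lam + 2 * of_int (int (nat i)))" using v mi by simp
        then show ?thesis by (rule up)
      next
        case False
        then have "(of_nat (nat (- i)) :: complex) = of_int (- i)" by simp
        then have "v \<in> W (lam - 2 * of_nat (nat (- i)))" using v mi by simp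
        then show ?thesis by (rule down)
      qed
    qed
    have allW: "(P 0 ^^ Suc N0) v = 0" if v: "v \<in> W \<mu>" for \<mu> v
    proof (cases "\<mu> - lam \<in> \<int>")
      case False then have "v = 0" using WZ v by blast
      then show ?thesis using funpow_lin_zero[OF linP[OF n0]] by (simp del: funpow.simps)
    next
      case True
      then obtain m where m: "\<mu> - lam = of_int m" by (rule Ints_cases)
      then have vm: "v \<in> W (lam + of_int m)" using v by (simp add: algebra_simps)
      show ?thesis
      proof (cases "even m")
        case True then have "(P 0 ^^ N0) v = 0" using evenA vm by blast
        then show ?thesis using lin_zero[OF linP[OF n0]] by simp
      next
        case False
        have "P 0 v \<in> W (lam + of_int (m + int n))" by (rule W_cong[OF P_W[OF n0 vm]]) simp
        moreover have "even (m + int n)" using False on by simp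
        ultimately have "(P 0 ^^ N0) (P 0 v) = 0" using evenA by blast
        then show ?thesis by (simp only: funpow_Suc_right comp_def)
      qed
    qed
    have allV: "(P 0 ^^ Suc N0) v = 0" for v
    proof -
      have mh1: "module_hom s s (P 0 ^^ Suc N0)" using lin_mh[OF lin_pow[OF linP[OF n0]]] .
      have "v \<in> span (\<Union>\<mu>. W \<mu>)" using wm unfolding weight_mod_def by blast
      then show ?thesis by (rule module_hom.eq_0_on_span[OF mh1, rotated]) (use allW in blast)
    qed
    have nil: "\<exists>N. \<forall>v. (P k ^^ N) v = 0" if "k \<le> n" for k
      using that
    proof (induction k)
      case 0 then show ?case using allV by blast
    next
      case (Suc k)
      then obtain N where N: "\<forall>v. (P k ^^ N) v = 0" by auto
      have kn: "k < n" using Suc.prems by simp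
      have "\<forall>v. (P k ^^ Suc N) v = 0" using N lin_zero[OF linP] kn by simp
      then have "\<forall>v. (P (Suc k) ^^ (2 * N + 1)) v = 0" by (rule ritt[OF kn])
      then show ?case by blast
    qed
    have ck: "k \<le> Suc n \<Longrightarrow> \<exists>u. u \<noteq> 0 \<and> (\<forall>i<k. P i u = 0)" for k
    proof (induction k)
      case 0 then show ?case using x(2) by blast
    next
      case (Suc k)
      then obtain u where u: "u \<noteq> 0" "\<forall>i<k. P i u = 0" by auto
      have kn: "k \<le> n" using Suc.prems by simp
      obtain N where "\<forall>v. (P k ^^ N) v = 0" using nil[OF kn] by blast
      then obtain j where j: "(P k ^^ j) u \<noteq> 0" "P k ((P k ^^ j) u) = 0"
        using last_nonzero[OF u(1)] by blast
      have "P i ((P k ^^ j) u) = 0" if "i < Suc k" for i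
      proof (cases "i = k")
        case True then show ?thesis using j by simp
      next
        case False then have i: "i < k" "i \<le> n" using that kn by auto
        have "P i ((P k ^^ j) u) = (P k ^^ j) (P i u)" using Ppow_comm[OF i(2) kn] by simp
        then show ?thesis using u(2) i(1) funpow_lin_zero[OF linP[OF kn]] by simp
      qed
      then show ?case using j(1) by blast
    qed
    obtain u where "u \<noteq> 0" "\<forall>i<Suc n. P i u = 0" using ck[of "Suc n"] by auto
    then show False using K0 by (meson less_Suc_eq_le)
  qed
qed

end


lemma shift_int:
  fixes f :: "complex \<Rightarrow> nat"
  assumes sh: "\<And>\<mu>. f (\<mu> + c) = f \<mu>"
  shows "f (\<mu> + of_int i * c) = f \<mu>"
proof -
  have up: "f (\<mu> + of_nat k * c) = f \<mu>" for k
  proof (induction k)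
    case 0 then show ?case by simp
  next
    case (Suc k)
    have "f (\<mu> + of_nat (Suc k) * c) = f ((\<mu> + of_nat k * c) + c)"
      by (rule arg_cong[where f = f]) (simp add: algebra_simps)
    also have "\<dots> = f (\<mu> + of_nat k * c)" by (rule sh)
    finally show ?case using Suc.IH by simp
  qed
  have down: "f (\<mu> - of_nat k * c) = f \<mu>" for k
  proof (induction k)
    case 0 then show ?case by simp
  next
    case (Suc k)
    have "f (\<mu> - of_nat k * c) = f ((\<mu> - of_nat (Suc k) * c) + c)"
      by (rule arg_cong[where f = f]) (simp add: algebra_simps)
    also have "\<dots> = f (\<mu> - of_nat (Suc k) * c)" by (rule sh)
    finally have "f (\<mu> - of_nat (Suc k) * c) = f (\<mu> - of_nat k * c)" by simp
    then show ?case using Suc.IH by simp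
  qed
  show ?thesis
  proof (cases "0 \<le> i")
    case True
    then have "(of_int i :: complex) = of_nat (nat i)" by simp
    then show ?thesis using up[of "nat i"] by simp
  next
    case False
    then have "(of_int i :: complex) = - of_nat (nat (- i))" by simp
    then show ?thesis using down[of "nat (- i)"] by simp
  qed
qed

context SGM begin

lemma part2:
  assumes nh: "\<not> highest_mod n s E H F P" and nl: "\<not> lowest_mod n s E H F P"
  shows "bij E \<and> bij F \<and>
            (\<forall>\<mu>\<in>supp s H. \<forall>i::int. dim (W (\<mu> + 2 * of_int i)) = dim (W \<mu>)) \<and>
            (odd n \<longrightarrow> (\<forall>\<mu>\<in>supp s H. \<forall>i::int. dim (W (\<mu> + of_int i)) = dim (W \<mu>)))"
proof -
  have iE: "inj E" by (rule inj_E[OF nh])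
  have iF: "inj F" by (rule inj_F[OF nl])
  have n0: "0 \<le> n" by simp
  have P0i: "inj (P 0)" if "odd n" using P0_inj[OF that iE iF] .
  have Pni: "inj (P n)" if on: "odd n"
  proof -
    interpret S2: SGM n s F "\<lambda>v. - H v" E "\<lambda>k. P (n - k)" "- lam" by (rule twist_SGM)
    have "inj ((\<lambda>k. P (n - k)) 0)" by (rule S2.P0_inj[OF on iF iE])
    then show ?thesis by simp
  qed
  have fd: "fin_dim s (W \<mu>)" if T: "\<mu> - lam \<in> \<int>" for \<mu>
  proof -
    obtain m where m: "\<mu> - lam = of_int m" using T by (rule Ints_cases)
    then have \<mu>: "\<mu> = lam + of_int m" by (simp add: algebra_simps)
    show ?thesis
    proof (cases "even m")
      case True
      then obtain i where "m = 2 * i" by (rule evenE)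
      then show ?thesis using classA_fd[OF iE iF, of i] \<mu> by simp
    next
      case False
      show ?thesis
      proof (cases "even n")
        case True
        then show ?thesis using noB[OF True False] \<mu> fd_zero by simp
      next
        case on: False
        have "even (m + int n)" using False on by simp
        then obtain i where i: "m + int n = 2 * i" by (rule evenE)
        show ?thesis
        proof (rule fd_inj[OF linP[OF n0] P0i[OF on] _ classA_fd[OF iE iF, of i]])
          fix x assume "x \<in> W \<mu>"
          then show "P 0 x \<in> W (lam + 2 * of_int i)"
          proof (rule W_cong[OF P_W[OF n0]])
            have "(of_int (m + int n) :: complex) = of_int (2 * i)" using i by simp
            then show "\<mu> + of_int (int n - 2 * int 0) = lam + 2 * of_int i" using \<mu> by (simp add: algebra_simps)
          qed
        qed
      qed
    qed
  qed
  have surj2: "E ` W \<mu> = W (\<mu> + 2) \<and> F ` W (\<mu> + 2) = W \<mu>" for \<mu>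
  proof (cases "\<mu> - lam \<in> \<int>")
    case True
    have T2: "\<mu> + 2 - lam \<in> \<int>" using True Ints_add[OF True, of 2] by (simp add: algebra_simps)
    have EW: "E x \<in> W (\<mu> + 2)" if "x \<in> W \<mu>" for x using E_W[OF that] .
    have FW: "F x \<in> W \<mu>" if "x \<in> W (\<mu> + 2)" for x using F_W[OF that] by simp
    have "E ` W \<mu> = W (\<mu> + 2)" by (rule surj_fd[OF W_sub linE iE EW linF iF FW fd[OF True] fd[OF T2]])
    moreover have "F ` W (\<mu> + 2) = W \<mu>" by (rule surj_fd[OF W_sub linF iF FW linE iE EW fd[OF T2] fd[OF True]])
    ultimately show ?thesis by blast
  next
    case False
    have F2: "\<not> (\<mu> + 2 - lam \<in> \<int>)"
    proof
      assume "\<mu> + 2 - lam \<in> \<int>"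
      then have "\<mu> + 2 - lam - 2 \<in> \<int>" using Ints_diff[of "\<mu> + 2 - lam" 2] by simp
      then show False using False by (simp add: algebra_simps)
    qed
    have "W \<mu> = {0}" "W (\<mu> + 2) = {0}" using WZ False F2 by auto
    then show ?thesis using lin_zero[OF linE] lin_zero[OF linF] by simp
  qed
  have bE: "bij E"
  proof (rule bijI[OF iE])
    have sub: "subspace (range E)" using module_hom.subspace_image[OF lin_mh[OF linE] subspace_UNIV] .
    have "(\<Union>\<mu>. W \<mu>) \<subseteq> range E"
    proof
      fix x assume "x \<in> (\<Union>\<mu>. W \<mu>)"
      then obtain \<mu> where "x \<in> W \<mu>" by blast
      then have "x \<in> E ` W (\<mu> - 2 )" using surj2[of "\<mu> - 2"] by simp
      then show "x \<in> range E" by blast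
    qed
    then have "span (\<Union>\<mu>. W \<mu>) \<subseteq> range E" using span_minimal[OF _ sub] by blast
    then show "surj E" using wm unfolding weight_mod_def by blast
  qed
  have bF: "bij F"
  proof (rule bijI[OF iF])
    have sub: "subspace (range F)" using module_hom.subspace_image[OF lin_mh[OF linF] subspace_UNIV] .
    have "(\<Union>\<mu>. W \<mu>) \<subseteq> range F"
    proof
      fix x assume "x \<in> (\<Union>\<mu>. W \<mu>)"
      then obtain \<mu> where "x \<in> W \<mu>" by blast
      then have "x \<in> F ` W (\<mu> + 2)" using surj2[of \<mu>] by simp
      then show "x \<in> range F" by blast
    qed
    then have "span (\<Union>\<mu>. W \<mu>) \<subseteq> range F" using span_minimal[OF _ sub] by blast
    then show "surj F" using wm unfolding weight_mod_def by blast
  qed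
  have de: "dim (W (\<mu> + 2)) = dim (W \<mu>)" for \<mu>
    by (rule dim_iso[OF linE iE]) (use surj2 in blast)
  have de2: "dim (W (\<mu> + 2 * of_int i)) = dim (W \<mu>)" for \<mu> and i :: int
    using shift_int[where f = "\<lambda>\<mu>. dim (W \<mu>)" and c = 2, OF de, of \<mu> i] by (simp add: mult.commute)
  have d1: "dim (W (\<mu> + 1)) = dim (W \<mu>)" if on: "odd n" for \<mu>
  proof (cases "\<mu> - lam \<in> \<int>")
    case True
    obtain t where t: "n = 2 * t + 1" using on oddE by blast
    have T1: "\<mu> + 1 - lam \<in> \<int>" using Ints_add[OF True, of 1] by (simp add: algebra_simps)
    have Tn: "\<mu> + of_nat n - lam \<in> \<int>" using Ints_add[OF True, of "of_nat n"] by (simp add: algebra_simps)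
    have Tm: "\<mu> + 1 - of_nat n - lam \<in> \<int>" using Ints_diff[OF T1, of "of_nat n"] by (simp add: algebra_simps)
    have "dim (W \<mu>) \<le> dim (W (\<mu> + of_nat n))"
    proof (rule dim_inj_le[OF linP[OF n0] P0i[OF on] _ fd[OF Tn]])
      fix x assume "x \<in> W \<mu>"
      then show "P 0 x \<in> W (\<mu> + of_nat n)" by (rule W_cong[OF P_W[OF n0]]) simp
    qed
    also have "W (\<mu> + of_nat n) = W ((\<mu> + 1) + 2 * of_int (int t))" using t by (simp add: algebra_simps)
    also have "dim \<dots> = dim (W (\<mu> + 1))" by (rule de2)
    finally have le1: "dim (W \<mu>) \<le> dim (W (\<mu> + 1))" .
    have nn: "n \<le> n" by simp
    have "dim (W (\<mu> + 1)) \<le> dim (W (\<mu> + 1 - of_nat n))"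
    proof (rule dim_inj_le[OF linP[OF nn] Pni[OF on] _ fd[OF Tm]])
      fix x assume "x \<in> W (\<mu> + 1)"
      then show "P n x \<in> W (\<mu> + 1 - of_nat n)" by (rule W_cong[OF P_W[OF nn]]) simp
    qed
    also have "W (\<mu> + 1 - of_nat n) = W (\<mu> + 2 * of_int (- int t))" using t by (simp add: algebra_simps)
    also have "dim \<dots> = dim (W \<mu>)" by (rule de2)
    finally have le2: "dim (W (\<mu> + 1)) \<le> dim (W \<mu>)" .
    show ?thesis using le1 le2 by simp
  next
    case False
    have F1: "\<not> (\<mu> + 1 - lam \<in> \<int>)"
    proof
      assume "\<mu> + 1 - lam \<in> \<int>"
      then have "\<mu> + 1 - lam - 1 \<in> \<int>" using Ints_diff[of "\<mu> + 1 - lam" 1] by simp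
      then show False using False by (simp add: algebra_simps)
    qed
    have "W \<mu> = {0}" "W (\<mu> + 1) = {0}" using WZ False F1 by auto
    then show ?thesis by simp
  qed
  have d1i: "dim (W (\<mu> + of_int i)) = dim (W \<mu>)" if on: "odd n" for \<mu> and i :: int
    using shift_int[where f = "\<lambda>\<mu>. dim (W \<mu>)" and c = 1, OF d1[OF on], of \<mu> i] by simp
  show ?thesis using bE bF de2 d1i by blast
qed

end

theorem mainTheorem12:
  fixes n :: nat and s :: "complex \<Rightarrow> 'v::ab_group_add \<Rightarrow> 'v"
    and E H F :: "'v \<Rightarrow> 'v" and P :: "nat \<Rightarrow> 'v \<Rightarrow> 'v" and lam :: complex
  assumes "gmod n s E H F P"
    and "simple_mod n s E H F P"
    and "weight_mod s H"
    and "\<forall>\<mu>\<in>supp s H. \<mu> - lam \<in> \<int>"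
    and "wspace s H lam \<noteq> {0}" and "fin_dim s (wspace s H lam)"
    and "\<exists>k\<le>n. \<exists>v. P k v \<noteq> 0"
  shows "(\<not> highest_mod n s E H F P \<longrightarrow> inj E) \<and>
         (\<not> lowest_mod n s E H F P \<longrightarrow> inj F) \<and>
         (\<not> highest_mod n s E H F P \<and> \<not> lowest_mod n s E H F P \<longrightarrow>
            bij E \<and> bij F \<and>
            (\<forall>\<mu>\<in>supp s H. \<forall>i::int.
               vector_space.dim s (wspace s H (\<mu> + 2 * of_int i)) = vector_space.dim s (wspace s H \<mu>)) \<and>
            (odd n \<longrightarrow> (\<forall>\<mu>\<in>supp s H. \<forall>i::int.
               vector_space.dim s (wspace s H (\<mu> + of_int i)) = vector_space.dim s (wspace s H \<mu>))))"
proof -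
  interpret S: SGM n s E H F P lam
    by (simp add: SGM_def SGM_axioms_def GM_def assms)
  show ?thesis using S.inj_E S.inj_F S.part2 by blast
qed


end
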